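(* Let $\mathcal{C}$ be a d-category. A $\mathcal{C}$-language $L$ is regular if and only if (1) the sets $\mathrm{src}(L)$ and $\mathrm{tgt}(L)$ are finite, and (2) ${}_UL_V$ is regular for all $U\in\mathrm{src}(L)$ and $V\in\mathrm{tgt}(L)$.
   Context: A d-category is a small category $\mathcal{C}$ with wide subcategories $\mathcal{C}^+$ (formorphisms) and $\mathcal{C}^-$ (backmorphisms) such that an invertible $\varphi$ is in $\mathcal{C}^+$ iff $\varphi^{-1}\in\mathcal{C}^-$. A $\mathcal{C}$-automaton is a presheaf $X:\mathcal{C}^{op}\to\mathbf{Set}$ with sets of start and accept elements (elements are pairs $(U,x)$, $x\in X[U]$); morphisms preserve them. A linear category is a bipointed d-category isomorphic to a finite (possibly empty) concatenation (gluing $\top$ to $\bot$) of $\mathbf S$ (formorphism $\bot\to\top$), $\mathbf T$ (backmorphism $\top\to\bot$), $\mathbf I$ (inverse pair); a path is a d-functor $\omega:\mathcal I\to\mathcal{C}$ from one; its track object is $\operatorname{colim}_i\mathcal{C}(-,\omega(i))$ with single start element image of $\mathrm{id}_{\omega(\bot)}$ (lying over $\mathrm{src}=\omega(\bot)$) and single accept element image of $\mathrm{id}_{\omega(\top)}$ (over $\mathrm{tgt}=\omega(\top)$); track objects are automata isomorphic to such. $\Delta\sqsubseteq\Gamma$ if there is an automaton morphism $\Delta\to\Gamma$. A $\mathcal{C}$-language is a class of track objects down-closed under $\sqsubseteq$. $\mathrm{Lang}(X)$ is the class of track objects admitting an automaton morphism to $X$. A presheaf $X$ is finitely generated if $X\cong\operatorname{colim}_{e\in\mathcal{E}}\mathcal{C}(-,G(e))$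 for some finite category $\mathcal{E}$ and functor $G:\mathcal{E}\to\mathcal{C}$; an automaton has finite type if its presheaf is finitely generated and it has finitely many start and accept elements. $L$ is regular if $L=\mathrm{Lang}(X)$ for some finite-type automaton $X$. $\mathrm{src}(L)=\{\mathrm{src}\Gamma\mid\Gamma\in L\}$, $\mathrm{tgt}(L)=\{\mathrm{tgt}\Gamma\mid\Gamma\in L\}$, ${}_UL_V=\{\Gamma\in L\mid\mathrm{src}\Gamma=U,\mathrm{tgt}\Gamma=V\}$. *)

theory Defs
  imports Main
begin

record ('o,'m) cat =
  obs  :: "'o set"
  mors :: "'m set"
  dm   :: "'m \<Rightarrow> 'o"
  cd   :: "'m \<Rightarrow> 'o"
  cmp  :: "'m \<Rightarrow> 'm \<Rightarrow> 'm"   (* cmp C g f = g o f *)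
  idt  :: "'o \<Rightarrow> 'm"

record ('o,'m) dcat = "('o,'m) cat" +
  fwd :: "'m set"
  bwd :: "'m set"

definition hom :: "('o,'m,'z) cat_scheme \<Rightarrow> 'o \<Rightarrow> 'o \<Rightarrow> 'm set" where
  "hom C U V = {f \<in> mors C. dm C f = U \<and> cd C f = V}"

definition is_cat :: "('o,'m,'z) cat_scheme \<Rightarrow> bool" where
  "is_cat C \<longleftrightarrow>
     (\<forall>f\<in>mors C. dm C f \<in> obs C \<and> cd C f \<in> obs C) \<and>
     (\<forall>U\<in>obs C. idt C U \<in> hom C U U) \<and>
     (\<forall>f\<in>mors C. \<forall>g\<in>mors C. dm C g = cd C f \<longrightarrow> cmp C g f \<in> hom C (dm C f) (cd C g)) \<and>
     (\<forall>f\<in>mors C. cmp C f (idt C (dm C f)) = f \<and> cmp C (idt C (cd C f)) f = f) \<and>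
     (\<forall>f\<in>mors C. \<forall>g\<in>mors C. \<forall>h\<in>mors C. dm C g = cd C f \<longrightarrow> dm C h = cd C g \<longrightarrow>
        cmp C h (cmp C g f) = cmp C (cmp C h g) f)"

definition inverse_pair :: "('o,'m,'z) cat_scheme \<Rightarrow> 'm \<Rightarrow> 'm \<Rightarrow> bool" where
  "inverse_pair C f g \<longleftrightarrow> f \<in> mors C \<and> g \<in> mors C \<and> dm C g = cd C f \<and> cd C g = dm C f \<and>
     cmp C g f = idt C (dm C f) \<and> cmp C f g = idt C (cd C f)"

definition wide_subcat :: "('o,'m,'z) cat_scheme \<Rightarrow> 'm set \<Rightarrow> bool" where
  "wide_subcat C S \<longleftrightarrow> S \<subseteq> mors C \<and> (\<forall>U\<in>obs C. idt C U \<in> S) \<and>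
     (\<forall>f\<in>S. \<forall>g\<in>S. dm C g = cd C f \<longrightarrow> cmp C g f \<in> S)"

definition is_dcat :: "('o,'m,'z) dcat_scheme \<Rightarrow> bool" where
  "is_dcat C \<longleftrightarrow> is_cat C \<and> wide_subcat C (fwd C) \<and> wide_subcat C (bwd C) \<and>
     (\<forall>f g. inverse_pair C f g \<longrightarrow> (f \<in> fwd C \<longleftrightarrow> g \<in> bwd C))"

definition is_functor :: "(nat,nat,'z) cat_scheme \<Rightarrow> ('o,'m,'y) cat_scheme \<Rightarrow>
    (nat \<Rightarrow> 'o) \<Rightarrow> (nat \<Rightarrow> 'm) \<Rightarrow> bool" where
  "is_functor E C Gob Gmor \<longleftrightarrow>
     (\<forall>e\<in>obs E. Gob e \<in> obs C) \<and>
     (\<forall>a\<in>mors E. Gmor a \<in> hom C (Gob (dm E a)) (Gob (cd E a))) \<and>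
     (\<forall>e\<in>obs E. Gmor (idt E e) = idt C (Gob e)) \<and>
     (\<forall>a\<in>mors E. \<forall>b\<in>mors E. dm E b = cd E a \<longrightarrow> Gmor (cmp E b a) = cmp C (Gmor b) (Gmor a))"

(* A presheaf X : C^op -> Set: X[U] = Xs X U, and act X f : X[cd f] -> X[dm f]. *)
record ('o,'m,'x) aut =
  Xs  :: "'o \<Rightarrow> 'x set"
  act :: "'m \<Rightarrow> 'x \<Rightarrow> 'x"
  st  :: "('o \<times> 'x) set"   (* start elements *)
  ac  :: "('o \<times> 'x) set"   (* accept elements *)

definition elems :: "('o,'m,'x) aut \<Rightarrow> ('o \<times> 'x) set" where
  "elems X = {(U,x). x \<in> Xs X U}"

definition is_presheaf :: "('o,'m,'z) cat_scheme \<Rightarrow> ('o,'m,'x) aut \<Rightarrow> bool" where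
  "is_presheaf C X \<longleftrightarrow>
     (\<forall>U. U \<notin> obs C \<longrightarrow> Xs X U = {}) \<and>
     (\<forall>f\<in>mors C. \<forall>x\<in>Xs X (cd C f). act X f x \<in> Xs X (dm C f)) \<and>
     (\<forall>U\<in>obs C. \<forall>x\<in>Xs X U. act X (idt C U) x = x) \<and>
     (\<forall>f\<in>mors C. \<forall>g\<in>mors C. dm C g = cd C f \<longrightarrow>
        (\<forall>x\<in>Xs X (cd C g). act X (cmp C g f) x = act X f (act X g x)))"

definition is_automaton :: "('o,'m,'z) cat_scheme \<Rightarrow> ('o,'m,'x) aut \<Rightarrow> bool" where
  "is_automaton C X \<longleftrightarrow> is_presheaf C X \<and> st X \<subseteq> elems X \<and> ac X \<subseteq> elems X"

definition psh_hom :: "('o,'m,'z) cat_scheme \<Rightarrow> ('o,'m,'x) aut \<Rightarrow> ('o,'m,'y) aut \<Rightarrow>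
    ('o \<Rightarrow> 'x \<Rightarrow> 'y) \<Rightarrow> bool" where
  "psh_hom C X Y \<eta> \<longleftrightarrow>
     (\<forall>U x. x \<in> Xs X U \<longrightarrow> \<eta> U x \<in> Xs Y U) \<and>
     (\<forall>f\<in>mors C. \<forall>x\<in>Xs X (cd C f). \<eta> (dm C f) (act X f x) = act Y f (\<eta> (cd C f) x))"

definition psh_iso :: "('o,'m,'z) cat_scheme \<Rightarrow> ('o,'m,'x) aut \<Rightarrow> ('o,'m,'y) aut \<Rightarrow> bool" where
  "psh_iso C X Y \<longleftrightarrow> (\<exists>\<eta> \<theta>. psh_hom C X Y \<eta> \<and> psh_hom C Y X \<theta> \<and>
     (\<forall>U x. x \<in> Xs X U \<longrightarrow> \<theta> U (\<eta> U x) = x) \<and>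
     (\<forall>U y. y \<in> Xs Y U \<longrightarrow> \<eta> U (\<theta> U y) = y))"

definition aut_hom :: "('o,'m,'z) cat_scheme \<Rightarrow> ('o,'m,'x) aut \<Rightarrow> ('o,'m,'y) aut \<Rightarrow>
    ('o \<Rightarrow> 'x \<Rightarrow> 'y) \<Rightarrow> bool" where
  "aut_hom C X Y \<eta> \<longleftrightarrow> psh_hom C X Y \<eta> \<and>
     (\<forall>(U,x)\<in>st X. (U, \<eta> U x) \<in> st Y) \<and>
     (\<forall>(U,x)\<in>ac X. (U, \<eta> U x) \<in> ac Y)"

definition aut_le :: "('o,'m,'z) cat_scheme \<Rightarrow> ('o,'m,'x) aut \<Rightarrow> ('o,'m,'y) aut \<Rightarrow> bool" where
  "aut_le C X Y \<longleftrightarrow> (\<exists>\<eta>. aut_hom C X Y \<eta>)"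

definition aut_iso :: "('o,'m,'z) cat_scheme \<Rightarrow> ('o,'m,'x) aut \<Rightarrow> ('o,'m,'y) aut \<Rightarrow> bool" where
  "aut_iso C X Y \<longleftrightarrow> (\<exists>\<eta> \<theta>. aut_hom C X Y \<eta> \<and> aut_hom C Y X \<theta> \<and>
     (\<forall>U x. x \<in> Xs X U \<longrightarrow> \<theta> U (\<eta> U x) = x) \<and>
     (\<forall>U y. y \<in> Xs Y U \<longrightarrow> \<eta> U (\<theta> U y) = y))"

(* A diagram of representables: index objects DJ, index arrows DA (a : Ds a -> Dt a),
   object part Dob and arrow part Dmor. *)
record ('o,'m) diagram =
  DJ   :: "nat set"
  DA   :: "nat set"
  Ds   :: "nat \<Rightarrow> nat"
  Dt   :: "nat \<Rightarrow> nat"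
  Dob  :: "nat \<Rightarrow> 'o"
  Dmor :: "nat \<Rightarrow> 'm"

definition colim_dom :: "('o,'m,'z) cat_scheme \<Rightarrow> ('o,'m) diagram \<Rightarrow> 'o \<Rightarrow> (nat \<times> 'm) set" where
  "colim_dom C D U = {(j,h). j \<in> DJ D \<and> h \<in> hom C U (Dob D j)}"

definition colim_step :: "('o,'m,'z) cat_scheme \<Rightarrow> ('o,'m) diagram \<Rightarrow> 'o \<Rightarrow> ((nat \<times> 'm) \<times> (nat \<times> 'm)) set" where
  "colim_step C D U = {((Ds D a, h), (Dt D a, cmp C (Dmor D a) h)) | a h.
      a \<in> DA D \<and> h \<in> hom C U (Dob D (Ds D a))}"

definition colim_eq :: "('o,'m,'z) cat_scheme \<Rightarrow> ('o,'m) diagram \<Rightarrow> 'o \<Rightarrow> ((nat \<times> 'm) \<times> (nat \<times> 'm)) set" where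
  "colim_eq C D U = ((colim_step C D U \<union> (colim_step C D U)\<inverse>)\<^sup>*) \<inter> (colim_dom C D U \<times> colim_dom C D U)"

(* colim_j C(-, D j), computed pointwise in Set *)
definition colim :: "('o,'m,'z) cat_scheme \<Rightarrow> ('o,'m) diagram \<Rightarrow> ('o,'m,(nat \<times> 'm) set) aut" where
  "colim C D = \<lparr> Xs = (\<lambda>U. if U \<in> obs C then colim_dom C D U // colim_eq C D U else {}),
      act = (\<lambda>f c. colim_eq C D (dm C f) `` {(fst (SOME p. p \<in> c), cmp C (snd (SOME p. p \<in> c)) f)}),
      st = {}, ac = {} \<rparr>"

definition functor_diagram :: "(nat,nat,'z) cat_scheme \<Rightarrow> (nat \<Rightarrow> 'o) \<Rightarrow> (nat \<Rightarrow> 'm) \<Rightarrow> ('o,'m) diagram" where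
  "functor_diagram E Gob Gmor = \<lparr> DJ = obs E, DA = mors E, Ds = dm E, Dt = cd E, Dob = Gob, Dmor = Gmor \<rparr>"

definition fin_gen :: "('o,'m,'z) cat_scheme \<Rightarrow> ('o,'m,'x) aut \<Rightarrow> bool" where
  "fin_gen C X \<longleftrightarrow> (\<exists>(E :: (nat,nat) cat) Gob Gmor. is_cat E \<and> finite (obs E) \<and> finite (mors E) \<and>
      is_functor E C Gob Gmor \<and> psh_iso C X (colim C (functor_diagram E Gob Gmor)))"

definition finite_type :: "('o,'m,'z) cat_scheme \<Rightarrow> ('o,'m,'x) aut \<Rightarrow> bool" where
  "finite_type C X \<longleftrightarrow> is_automaton C X \<and> fin_gen C X \<and> finite (st X) \<and> finite (ac X)"

(* Pieces of a linear category: S (formorphism bot->top), T (backmorphism top->bot),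
   I (inverse pair: formorphism bot->top with inverse backmorphism top->bot).
   A path is given by the images of the gluing objects and of the generating arrows. *)
datatype 'm pstep = PS 'm | PT 'm | PI 'm

definition is_path :: "('o,'m,'z) dcat_scheme \<Rightarrow> 'o list \<Rightarrow> 'm pstep list \<Rightarrow> bool" where
  "is_path C ws ss \<longleftrightarrow> length ws = Suc (length ss) \<and> set ws \<subseteq> obs C \<and>
     (\<forall>k<length ss. case ss ! k of
         PS f \<Rightarrow> f \<in> fwd C \<and> f \<in> hom C (ws ! k) (ws ! Suc k)
       | PT f \<Rightarrow> f \<in> bwd C \<and> f \<in> hom C (ws ! Suc k) (ws ! k)
       | PI f \<Rightarrow> f \<in> fwd C \<and> f \<in> hom C (ws ! k) (ws ! Suc k) \<and>
                 (\<exists>g. g \<in> bwd C \<and> inverse_pair C f g))"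

definition step_mor :: "'m pstep \<Rightarrow> 'm" where
  "step_mor s = (case s of PS f \<Rightarrow> f | PT f \<Rightarrow> f | PI f \<Rightarrow> f)"

definition path_diagram :: "'o list \<Rightarrow> 'm pstep list \<Rightarrow> ('o,'m) diagram" where
  "path_diagram ws ss = \<lparr> DJ = {0..length ss}, DA = {0..<length ss},
      Ds = (\<lambda>k. case ss ! k of PT _ \<Rightarrow> Suc k | _ \<Rightarrow> k),
      Dt = (\<lambda>k. case ss ! k of PT _ \<Rightarrow> k | _ \<Rightarrow> Suc k),
      Dob = (\<lambda>i. ws ! i), Dmor = (\<lambda>k. step_mor (ss ! k)) \<rparr>"

definition track :: "('o,'m,'z) dcat_scheme \<Rightarrow> 'o list \<Rightarrow> 'm pstep list \<Rightarrow> ('o,'m,(nat \<times> 'm) set) aut" where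
  "track C ws ss = (let D = path_diagram ws ss; X = colim C D in
     X \<lparr> st := {(hd ws, colim_eq C D (hd ws) `` {(0, idt C (hd ws))})},
         ac := {(last ws, colim_eq C D (last ws) `` {(length ss, idt C (last ws))})} \<rparr>)"

definition track_object :: "('o,'m,'z) dcat_scheme \<Rightarrow> ('o,'m,'x) aut \<Rightarrow> bool" where
  "track_object C G \<longleftrightarrow> is_automaton C G \<and> (\<exists>ws ss. is_path C ws ss \<and> aut_iso C G (track C ws ss))"

(* Languages are represented as sets of track objects with carrier type (nat x 'm) set,
   which is large enough to contain an isomorphic copy of every track object. *)
type_synonym ('o,'m) tobj = "('o,'m,(nat \<times> 'm) set) aut"

definition is_language :: "('o,'m,'z) dcat_scheme \<Rightarrow> ('o,'m) tobj set \<Rightarrow> bool" where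
  "is_language C L \<longleftrightarrow> (\<forall>G\<in>L. track_object C G) \<and>
     (\<forall>G\<in>L. \<forall>D. track_object C D \<and> aut_le C D G \<longrightarrow> D \<in> L)"

definition Lang :: "('o,'m,'z) dcat_scheme \<Rightarrow> ('o,'m,'x) aut \<Rightarrow> ('o,'m) tobj set" where
  "Lang C X = {G. track_object C G \<and> aut_le C G X}"

definition regular :: "('o,'m,'z) dcat_scheme \<Rightarrow> ('o,'m) tobj set \<Rightarrow> bool" where
  "regular C L \<longleftrightarrow> (\<exists>X :: ('o,'m) tobj. finite_type C X \<and> L = Lang C X)"

definition src :: "('o,'m,'x) aut \<Rightarrow> 'o" where
  "src G = fst (THE e. e \<in> st G)"

definition tgt :: "('o,'m,'x) aut \<Rightarrow> 'o" where
  "tgt G = fst (THE e. e \<in> ac G)"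

definition sub_lang :: "('o,'m) tobj set \<Rightarrow> 'o \<Rightarrow> 'o \<Rightarrow> ('o,'m) tobj set" where
  "sub_lang L U V = {G \<in> L. src G = U \<and> tgt G = V}"

end

theory Submission
  imports Defs
begin

lemma homD: "f \<in> hom C U V \<Longrightarrow> f \<in> mors C \<and> dm C f = U \<and> cd C f = V"
  by (simp add: hom_def)
lemma homI: "f \<in> mors C \<Longrightarrow> dm C f = U \<Longrightarrow> cd C f = V \<Longrightarrow> f \<in> hom C U V"
  by (simp add: hom_def)

lemma cat_comp: "is_cat C \<Longrightarrow> f \<in> hom C U V \<Longrightarrow> g \<in> hom C V W \<Longrightarrow> cmp C g f \<in> hom C U W"
  unfolding is_cat_def hom_def by auto
lemma cat_assoc: "is_cat C \<Longrightarrow> f \<in> hom C U V \<Longrightarrow> g \<in> hom C V W \<Longrightarrow> h \<in> hom C W Z \<Longrightarrow>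
   cmp C h (cmp C g f) = cmp C (cmp C h g) f"
  unfolding is_cat_def hom_def by auto
lemma cat_id: "is_cat C \<Longrightarrow> U \<in> obs C \<Longrightarrow> idt C U \<in> hom C U U"
  unfolding is_cat_def by auto
lemma cat_idl: "is_cat C \<Longrightarrow> f \<in> hom C U V \<Longrightarrow> cmp C (idt C V) f = f"
  unfolding is_cat_def hom_def by auto
lemma cat_idr: "is_cat C \<Longrightarrow> f \<in> hom C U V \<Longrightarrow> cmp C f (idt C U) = f"
  unfolding is_cat_def hom_def by auto
lemma hom_obs: "is_cat C \<Longrightarrow> f \<in> hom C U V \<Longrightarrow> U \<in> obs C \<and> V \<in> obs C"
  unfolding is_cat_def hom_def by auto

definition good_diag :: "('o,'m,'z) cat_scheme \<Rightarrow> ('o,'m) diagram \<Rightarrow> bool" where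
  "good_diag C D \<longleftrightarrow> (\<forall>a\<in>DA D. Ds D a \<in> DJ D \<and> Dt D a \<in> DJ D \<and>
      Dmor D a \<in> hom C (Dob D (Ds D a)) (Dob D (Dt D a)))"

definition pc :: "('o,'m,'z) cat_scheme \<Rightarrow> nat \<times> 'm \<Rightarrow> 'm \<Rightarrow> nat \<times> 'm" where
  "pc C x f = (fst x, cmp C (snd x) f)"

abbreviation SS where "SS C D U \<equiv> colim_step C D U \<union> (colim_step C D U)\<inverse>"

lemma step_dom:
  assumes "good_diag C D" "is_cat C"
  shows "colim_step C D U \<subseteq> colim_dom C D U \<times> colim_dom C D U"
  using assms unfolding good_diag_def colim_step_def colim_dom_def
  by (auto intro: cat_comp)

lemma equiv_colim:
  assumes "good_diag C D" "is_cat C"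
  shows "equiv (colim_dom C D U) (colim_eq C D U)"
proof (rule equivI)
  show "colim_eq C D U \<subseteq> colim_dom C D U \<times> colim_dom C D U"
    unfolding colim_eq_def by auto
  show "refl_on (colim_dom C D U) (colim_eq C D U)"
    unfolding colim_eq_def refl_on_def by auto
  have s: "(SS C D U)\<inverse> = SS C D U" by auto
  show "sym (colim_eq C D U)"
    unfolding colim_eq_def sym_def
  proof (intro allI impI)
    fix x y assume "(x, y) \<in> (SS C D U)\<^sup>* \<inter> colim_dom C D U \<times> colim_dom C D U"
    then have "(y, x) \<in> ((SS C D U)\<inverse>)\<^sup>*" "x \<in> colim_dom C D U" "y \<in> colim_dom C D U"
      by (auto simp: rtrancl_converse)
    then show "(y, x) \<in> (SS C D U)\<^sup>* \<inter> colim_dom C D U \<times> colim_dom C D U"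
      by (simp only: s) auto
  qed
  show "trans (colim_eq C D U)"
    unfolding colim_eq_def trans_def by auto
qed

lemma pc_step:
  assumes "good_diag C D" "is_cat C" "f \<in> hom C U V" "(y, z) \<in> colim_step C D V"
  shows "(pc C y f, pc C z f) \<in> colim_step C D U"
proof -
  from assms(4) obtain a h where a: "a \<in> DA D" "h \<in> hom C V (Dob D (Ds D a))"
    "y = (Ds D a, h)" "z = (Dt D a, cmp C (Dmor D a) h)"
    unfolding colim_step_def by blast
  have m: "Dmor D a \<in> hom C (Dob D (Ds D a)) (Dob D (Dt D a))" using assms(1) a(1) unfolding good_diag_def by auto
  have h': "cmp C h f \<in> hom C U (Dob D (Ds D a))" using cat_comp[OF assms(2) assms(3) a(2)] .
  have e: "cmp C (cmp C (Dmor D a) h) f = cmp C (Dmor D a) (cmp C h f)"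
    using cat_assoc[OF assms(2) assms(3) a(2) m] by simp
  show ?thesis unfolding colim_step_def pc_def using a h' e by auto
qed

lemma pc_rtrancl:
  assumes "good_diag C D" "is_cat C" "f \<in> hom C U V" "(y, z) \<in> (SS C D V)\<^sup>*"
  shows "(pc C y f, pc C z f) \<in> (SS C D U)\<^sup>*"
  using assms(4)
proof (induction rule: rtrancl_induct)
  case base then show ?case by simp
next
  case (step z w)
  from \<open>(z, w) \<in> SS C D V\<close> have "(pc C z f, pc C w f) \<in> SS C D U"
  proof
    assume "(z, w) \<in> colim_step C D V" then show ?thesis using pc_step[OF assms(1,2,3)] by blast
  next
    assume "(z, w) \<in> (colim_step C D V)\<inverse>" then show ?thesis using pc_step[OF assms(1,2,3), of w z] by blast
  qed
  with step.IH show ?case by (rule rtrancl_into_rtrancl)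
qed

lemma pc_dom:
  assumes "is_cat C" "f \<in> hom C U V" "x \<in> colim_dom C D V"
  shows "pc C x f \<in> colim_dom C D U"
  using assms cat_comp[OF assms(1,2)] unfolding colim_dom_def pc_def by auto

lemma pc_eq:
  assumes "good_diag C D" "is_cat C" "f \<in> hom C U V" "(y, z) \<in> colim_eq C D V"
  shows "(pc C y f, pc C z f) \<in> colim_eq C D U"
  using assms pc_rtrancl[OF assms(1,2,3)] pc_dom[OF assms(2,3)] unfolding colim_eq_def by auto

lemma Xs_colim: "Xs (colim C D) U = (if U \<in> obs C then colim_dom C D U // colim_eq C D U else {})"
  by (simp add: colim_def)

lemma act_colim: "act (colim C D) f c = colim_eq C D (dm C f) `` {(fst (SOME p. p \<in> c), cmp C (snd (SOME p. p \<in> c)) f)}"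
  by (simp add: colim_def)

lemma act_class:
  assumes "good_diag C D" "is_cat C" "x \<in> colim_dom C D V" "f \<in> hom C U V"
  shows "act (colim C D) f (colim_eq C D V `` {x}) = colim_eq C D U `` {pc C x f}"
proof -
  let ?c = "colim_eq C D V `` {x}"
  have eqv: "equiv (colim_dom C D V) (colim_eq C D V)" "equiv (colim_dom C D U) (colim_eq C D U)"
    using equiv_colim[OF assms(1,2)] by auto
  have "x \<in> ?c" using equiv_class_self[OF eqv(1) assms(3)] .
  then have p: "(SOME p. p \<in> ?c) \<in> ?c" by (rule someI)
  then have "(x, SOME p. p \<in> ?c) \<in> colim_eq C D V" by simp
  then have "(pc C x f, pc C (SOME p. p \<in> ?c) f) \<in> colim_eq C D U" by (rule pc_eq[OF assms(1,2,4)])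
  then have "colim_eq C D U `` {pc C x f} = colim_eq C D U `` {pc C (SOME p. p \<in> ?c) f}"
    by (rule equiv_class_eq[OF eqv(2)])
  then show ?thesis using assms(4) by (simp add: act_colim pc_def homD)
qed

lemma presheaf_colim:
  assumes "good_diag C D" "is_cat C"
  shows "is_presheaf C (colim C D)"
  unfolding is_presheaf_def
proof (intro conjI ballI allI impI)
  fix U assume "U \<notin> obs C" then show "Xs (colim C D) U = {}" by (simp add: Xs_colim)
next
  fix f x assume f: "f \<in> mors C" and x: "x \<in> Xs (colim C D) (cd C f)"
  have fh: "f \<in> hom C (dm C f) (cd C f)" using f by (simp add: hom_def)
  from x have "cd C f \<in> obs C" by (simp add: Xs_colim split: if_splits)
  from x obtain y where y: "y \<in> colim_dom C D (cd C f)" "x = colim_eq C D (cd C f) `` {y}"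
    by (auto simp: Xs_colim split: if_splits elim: quotientE)
  show "act (colim C D) f x \<in> Xs (colim C D) (dm C f)"
    using act_class[OF assms y(1) fh] pc_dom[OF assms(2) fh y(1)] hom_obs[OF assms(2) fh]
    by (simp add: y(2) Xs_colim quotientI)
next
  fix U x assume U: "U \<in> obs C" and x: "x \<in> Xs (colim C D) U"
  have ih: "idt C U \<in> hom C U U" using cat_id[OF assms(2) U] .
  from x obtain y where y: "y \<in> colim_dom C D U" "x = colim_eq C D U `` {y}"
    by (auto simp: Xs_colim split: if_splits elim: quotientE)
  have "pc C y (idt C U) = y" using y(1) cat_idr[OF assms(2)] unfolding pc_def colim_dom_def by auto
  then show "act (colim C D) (idt C U) x = x"
    using act_class[OF assms y(1) ih] y(2) by simp
next
  fix f g x assume f: "f \<in> mors C" and g: "g \<in> mors C" and e: "dm C g = cd C f"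
    and x: "x \<in> Xs (colim C D) (cd C g)"
  have fh: "f \<in> hom C (dm C f) (cd C f)" using f by (simp add: hom_def)
  have gh: "g \<in> hom C (cd C f) (cd C g)" using g e by (simp add: hom_def)
  have gfh: "cmp C g f \<in> hom C (dm C f) (cd C g)" using cat_comp[OF assms(2) fh gh] .
  from x obtain y where y: "y \<in> colim_dom C D (cd C g)" "x = colim_eq C D (cd C g) `` {y}"
    by (auto simp: Xs_colim split: if_splits elim: quotientE)
  have yd: "snd y \<in> hom C (cd C g) (Dob D (fst y))" using y(1) unfolding colim_dom_def by auto
  have "pc C y (cmp C g f) = pc C (pc C y g) f"
    using cat_assoc[OF assms(2) fh gh yd] unfolding pc_def by simp
  then show "act (colim C D) (cmp C g f) x = act (colim C D) f (act (colim C D) g x)"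
    using act_class[OF assms y(1) gfh] act_class[OF assms y(1) gh]
      act_class[OF assms pc_dom[OF assms(2) gh y(1)] fh] y(2) by simp
qed

lemma path_good:
  assumes "is_path C ws ss"
  shows "good_diag C (path_diagram ws ss)"
  unfolding good_diag_def path_diagram_def
proof (intro ballI conjI, simp_all)
  fix a assume a: "a < length ss"
  show "(case ss ! a of PT x \<Rightarrow> Suc a | _ \<Rightarrow> a) \<le> length ss"
    using a by (cases "ss ! a") auto
  show "(case ss ! a of PT x \<Rightarrow> a | _ \<Rightarrow> Suc a) \<le> length ss"
    using a by (cases "ss ! a") auto
  show "step_mor (ss ! a) \<in> hom C (ws ! (case ss ! a of PT x \<Rightarrow> Suc a | _ \<Rightarrow> a))
          (ws ! (case ss ! a of PT x \<Rightarrow> a | _ \<Rightarrow> Suc a))"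
    using assms a unfolding is_path_def
    by (cases "ss ! a") (auto simp: step_mor_def dest!: spec[of _ a])
qed

lemma track_Xs: "Xs (track C ws ss) = Xs (colim C (path_diagram ws ss))"
  by (simp add: track_def Let_def colim_def)
lemma track_act: "act (track C ws ss) = act (colim C (path_diagram ws ss))"
  by (simp add: track_def Let_def colim_def)

lemma track_conn:
  fixes Y :: "('o,'m,'y) aut" and C :: "('o,'m,'z) dcat_scheme"
  assumes cat: "is_cat C" and path: "is_path C ws ss"
    and psi: "psh_hom C (track C ws ss) Y \<psi>"
    and clo: "\<forall>f\<in>mors C. \<forall>y\<in>Xs Y (cd C f). P (cd C f) y \<longleftrightarrow> P (dm C f) (act Y f y)"
    and t: "t \<in> Xs (track C ws ss) U"
  shows "P U (\<psi> U t) \<longleftrightarrow>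
     P (hd ws) (\<psi> (hd ws) (colim_eq C (path_diagram ws ss) (hd ws) `` {(0, idt C (hd ws))}))"
proof -
  define D where "D = path_diagram ws ss"
  have gd: "good_diag C D" using path_good[OF path] by (simp add: D_def)
  have len: "length ws = Suc (length ss)" and wsobs: "set ws \<subseteq> obs C" using path by (auto simp: is_path_def)
  have DJ: "DJ D = {0..length ss}" "\<And>j. Dob D j = ws ! j" by (auto simp: D_def path_diagram_def)
  define g where "g j = colim_eq C D (ws ! j) `` {(j, idt C (ws ! j))}" for j
  have wsj: "j \<le> length ss \<Longrightarrow> ws ! j \<in> obs C" for j using wsobs len by auto
  have gdom: "j \<le> length ss \<Longrightarrow> (j, idt C (ws ! j)) \<in> colim_dom C D (ws ! j)" for j
    using cat_id[OF cat wsj] by (auto simp: colim_dom_def DJ)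
  have gX: "j \<le> length ss \<Longrightarrow> g j \<in> Xs (track C ws ss) (ws ! j)" for j
    using gdom[of j] wsj[of j] by (simp add: track_Xs D_def[symmetric] Xs_colim g_def quotientI)
  have psiX: "\<And>V x. x \<in> Xs (track C ws ss) V \<Longrightarrow> \<psi> V x \<in> Xs Y V"
    and psin: "\<And>f x. f \<in> mors C \<Longrightarrow> x \<in> Xs (track C ws ss) (cd C f) \<Longrightarrow>
         \<psi> (dm C f) (act (track C ws ss) f x) = act Y f (\<psi> (cd C f) x)"
    using psi unfolding psh_hom_def by auto
  have actg: "h \<in> hom C V (ws ! j) \<Longrightarrow> j \<le> length ss \<Longrightarrow>
      act (track C ws ss) h (g j) = colim_eq C D V `` {(j, h)}" for h V j
    using act_class[OF gd cat gdom[of j], of h V] cat_idl[OF cat, of h V "ws ! j"]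
    by (simp add: track_act D_def[symmetric] g_def pc_def)
  have transfer: "h \<in> hom C V (ws ! j) \<Longrightarrow> j \<le> length ss \<Longrightarrow>
      P V (\<psi> V (act (track C ws ss) h (g j))) \<longleftrightarrow> P (ws ! j) (\<psi> (ws ! j) (g j))" for h V j
  proof -
    assume h: "h \<in> hom C V (ws ! j)" and j: "j \<le> length ss"
    have hm: "h \<in> mors C" "dm C h = V" "cd C h = ws ! j" using homD[OF h] by auto
    have "\<psi> V (act (track C ws ss) h (g j)) = act Y h (\<psi> (ws ! j) (g j))"
      using psin[OF hm(1)] gX[OF j] hm by simp
    moreover have "\<psi> (ws ! j) (g j) \<in> Xs Y (cd C h)" using psiX[OF gX[OF j]] hm by simp
    ultimately show ?thesis using clo hm by auto
  qed
  define Q where "Q j = P (ws ! j) (\<psi> (ws ! j) (g j))" for j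
  have stepQ: "k < length ss \<Longrightarrow> Q k \<longleftrightarrow> Q (Suc k)" for k
  proof -
    assume k: "k < length ss"
    let ?s = "Ds D k" and ?t = "Dt D k"
    have kA: "k \<in> DA D" using k by (simp add: D_def path_diagram_def)
    have st: "?s \<le> length ss" "?t \<le> length ss" "Dmor D k \<in> hom C (ws ! ?s) (ws ! ?t)"
      using gd kA unfolding good_diag_def by (auto simp: DJ)
    have "((?s, idt C (ws ! ?s)), (?t, cmp C (Dmor D k) (idt C (ws ! ?s)))) \<in> colim_step C D (ws ! ?s)"
      unfolding colim_step_def using kA cat_id[OF cat wsj[OF st(1)]] by (auto simp: DJ)
    moreover have "cmp C (Dmor D k) (idt C (ws ! ?s)) = Dmor D k" using cat_idr[OF cat st(3)] .
    ultimately have "((?s, idt C (ws ! ?s)), (?t, Dmor D k)) \<in> colim_eq C D (ws ! ?s)"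
      using step_dom[OF gd cat] unfolding colim_eq_def by auto
    then have "g ?s = colim_eq C D (ws ! ?s) `` {(?t, Dmor D k)}"
      unfolding g_def by (rule equiv_class_eq[OF equiv_colim[OF gd cat]])
    also have "\<dots> = act (track C ws ss) (Dmor D k) (g ?t)" using actg[OF st(3) st(2)] by simp
    finally have "Q ?s \<longleftrightarrow> Q ?t" unfolding Q_def using transfer[OF st(3) st(2)] by simp
    moreover have "(?s = k \<and> ?t = Suc k) \<or> (?s = Suc k \<and> ?t = k)"
      by (cases "ss ! k") (auto simp: D_def path_diagram_def)
    ultimately show ?thesis by auto
  qed
  have Qall: "j \<le> length ss \<Longrightarrow> Q j \<longleftrightarrow> Q 0" for j
  proof (induction j)
    case 0 then show ?case by simp
  next
    case (Suc j) then have "Q j \<longleftrightarrow> Q 0" by simp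
    with stepQ[of j] Suc.prems show ?case by simp
  qed
  from t have U: "U \<in> obs C" by (simp add: track_Xs Xs_colim split: if_splits)
  from t obtain x where x: "x \<in> colim_dom C D U" "t = colim_eq C D U `` {x}"
    using U by (auto simp: track_Xs Xs_colim D_def[symmetric] elim: quotientE)
  obtain j h where jh: "x = (j, h)" "j \<le> length ss" "h \<in> hom C U (ws ! j)"
    using x(1) by (cases x) (auto simp: colim_dom_def DJ)
  have hd0: "hd ws = ws ! 0" using len by (cases ws) auto
  have "t = act (track C ws ss) h (g j)" using actg[OF jh(3) jh(2)] x(2) jh(1) by simp
  then have "P U (\<psi> U t) \<longleftrightarrow> Q j" using transfer[OF jh(3) jh(2)] Q_def by simp
  also have "\<dots> \<longleftrightarrow> Q 0" by (rule Qall[OF jh(2)])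
  also have "Q 0 \<longleftrightarrow> P (hd ws) (\<psi> (hd ws) (colim_eq C (path_diagram ws ss) (hd ws) `` {(0, idt C (hd ws))}))"
    using hd0 by (simp add: Q_def g_def D_def)
  finally show ?thesis .
qed

lemma psh_hom_comp:
  "psh_hom C X Y \<eta> \<Longrightarrow> psh_hom C Y Z \<zeta> \<Longrightarrow> psh_hom C X Z (\<lambda>U x. \<zeta> U (\<eta> U x))"
  unfolding psh_hom_def by auto

lemma aut_hom_comp:
  "aut_hom C X Y \<eta> \<Longrightarrow> aut_hom C Y Z \<zeta> \<Longrightarrow> aut_hom C X Z (\<lambda>U x. \<zeta> U (\<eta> U x))"
  unfolding aut_hom_def using psh_hom_comp[of C X Y \<eta> Z \<zeta>] by fast

lemma track_st: "st (track C ws ss) = {(hd ws, colim_eq C (path_diagram ws ss) (hd ws) `` {(0, idt C (hd ws))})}"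
  by (simp add: track_def Let_def colim_def)
lemma track_ac: "ac (track C ws ss) = {(last ws, colim_eq C (path_diagram ws ss) (last ws) `` {(length ss, idt C (last ws))})}"
  by (simp add: track_def Let_def colim_def)

lemma singleton_transfer:
  assumes "aut_hom C X Y \<eta>" "aut_hom C Y X \<theta>" "\<forall>U x. x \<in> Xs X U \<longrightarrow> \<theta> U (\<eta> U x) = x"
    "st X \<subseteq> elems X" "st Y = {(U0, y0)}"
  shows "st X = {(U0, \<theta> U0 y0)}"
proof -
  have "(U0, \<theta> U0 y0) \<in> st X" using assms(2,5) unfolding aut_hom_def by auto
  moreover have "e \<in> st X \<Longrightarrow> e = (U0, \<theta> U0 y0)" for e
  proof -
    assume e: "e \<in> st X"
    obtain U x where ux: "e = (U, x)" by (cases e)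
    have "(U, \<eta> U x) \<in> st Y" using assms(1) e ux unfolding aut_hom_def by auto
    then have "U = U0" "\<eta> U x = y0" using assms(5) by auto
    moreover have "x \<in> Xs X U" using assms(4) e ux by (auto simp: elems_def)
    ultimately show ?thesis using assms(3) ux by metis
  qed
  ultimately show ?thesis by blast
qed

lemma singleton_transfer_ac:
  assumes "aut_hom C X Y \<eta>" "aut_hom C Y X \<theta>" "\<forall>U x. x \<in> Xs X U \<longrightarrow> \<theta> U (\<eta> U x) = x"
    "ac X \<subseteq> elems X" "ac Y = {(U0, y0)}"
  shows "ac X = {(U0, \<theta> U0 y0)}"
proof -
  have "(U0, \<theta> U0 y0) \<in> ac X" using assms(2,5) unfolding aut_hom_def by auto
  moreover have "e \<in> ac X \<Longrightarrow> e = (U0, \<theta> U0 y0)" for e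
  proof -
    assume e: "e \<in> ac X"
    obtain U x where ux: "e = (U, x)" by (cases e)
    have "(U, \<eta> U x) \<in> ac Y" using assms(1) e ux unfolding aut_hom_def by auto
    then have "U = U0" "\<eta> U x = y0" using assms(5) by auto
    moreover have "x \<in> Xs X U" using assms(4) e ux by (auto simp: elems_def)
    ultimately show ?thesis using assms(3) ux by metis
  qed
  ultimately show ?thesis by blast
qed

lemma tobj_st: "track_object C G \<Longrightarrow> \<exists>s. st G = {(src G, s)}"
proof -
  assume "track_object C G"
  then obtain ws ss \<eta> \<theta> where a: "is_automaton C G" "aut_hom C G (track C ws ss) \<eta>"
    "aut_hom C (track C ws ss) G \<theta>" "\<forall>U x. x \<in> Xs G U \<longrightarrow> \<theta> U (\<eta> U x) = x"
    unfolding track_object_def aut_iso_def by blast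
  have "st G = {(hd ws, \<theta> (hd ws) (colim_eq C (path_diagram ws ss) (hd ws) `` {(0, idt C (hd ws))}))}"
    by (rule singleton_transfer[OF a(2,3,4)]) (use a(1) track_st in \<open>auto simp: is_automaton_def\<close>)
  then show ?thesis by (simp add: src_def)
qed

lemma tobj_ac: "track_object C G \<Longrightarrow> \<exists>s. ac G = {(tgt G, s)}"
proof -
  assume "track_object C G"
  then obtain ws ss \<eta> \<theta> where a: "is_automaton C G" "aut_hom C G (track C ws ss) \<eta>"
    "aut_hom C (track C ws ss) G \<theta>" "\<forall>U x. x \<in> Xs G U \<longrightarrow> \<theta> U (\<eta> U x) = x"
    unfolding track_object_def aut_iso_def by blast
  have "ac G = {(last ws, \<theta> (last ws) (colim_eq C (path_diagram ws ss) (last ws) `` {(length ss, idt C (last ws))}))}"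
    by (rule singleton_transfer_ac[OF a(2,3,4)]) (use a(1) track_ac in \<open>auto simp: is_automaton_def\<close>)
  then show ?thesis by (simp add: tgt_def)
qed

lemma tobj_conn:
  fixes Y :: "('o,'m,'y) aut" and C :: "('o,'m,'z) dcat_scheme"
  assumes cat: "is_cat C" and G: "track_object C G" and phi: "psh_hom C G Y \<phi>"
    and clo: "\<forall>f\<in>mors C. \<forall>y\<in>Xs Y (cd C f). P (cd C f) y \<longleftrightarrow> P (dm C f) (act Y f y)"
    and s: "(U0, s) \<in> st G" and x: "x \<in> Xs G U"
  shows "P U (\<phi> U x) \<longleftrightarrow> P U0 (\<phi> U0 s)"
proof -
  from G obtain ws ss \<eta> \<theta> where a: "is_automaton C G" "is_path C ws ss" "aut_hom C G (track C ws ss) \<eta>"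
    "aut_hom C (track C ws ss) G \<theta>" "\<forall>U x. x \<in> Xs G U \<longrightarrow> \<theta> U (\<eta> U x) = x"
    unfolding track_object_def aut_iso_def by blast
  let ?g0 = "colim_eq C (path_diagram ws ss) (hd ws) `` {(0, idt C (hd ws))}"
  have stG: "st G = {(hd ws, \<theta> (hd ws) ?g0)}"
    by (rule singleton_transfer[OF a(3,4,5)]) (use a(1) track_st in \<open>auto simp: is_automaton_def\<close>)
  have ps: "psh_hom C (track C ws ss) Y (\<lambda>U x. \<phi> U (\<theta> U x))"
    using psh_hom_comp[OF _ phi] a(4) unfolding aut_hom_def by blast
  have ex: "\<eta> U x \<in> Xs (track C ws ss) U" using a(3) x unfolding aut_hom_def psh_hom_def by blast
  have "P U (\<phi> U (\<theta> U (\<eta> U x))) \<longleftrightarrow> P (hd ws) (\<phi> (hd ws) (\<theta> (hd ws) ?g0))"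
    by (rule track_conn[OF cat a(2) ps clo ex])
  then show ?thesis using a(5) x s stG by auto
qed

definition emb :: "nat \<Rightarrow> nat \<times> 'm \<Rightarrow> nat \<times> 'm" where
  "emb k x = (k + 2 * fst x, snd x)"
definition M :: "nat \<Rightarrow> (nat \<times> 'm) \<times> (nat \<times> 'm) \<Rightarrow> (nat \<times> 'm) \<times> (nat \<times> 'm)" where
  "M k p = (emb k (fst p), emb k (snd p))"

lemma emb_inj: "emb k x = emb k y \<longleftrightarrow> x = y"
  by (cases x, cases y) (auto simp: emb_def)

lemma emb_disj: "k < 2 \<Longrightarrow> l < 2 \<Longrightarrow> k \<noteq> l \<Longrightarrow> emb k x \<noteq> emb l y"
  by (cases x, cases y) (auto simp: emb_def, presburger)

lemma pc_emb: "pc C (emb k x) f = emb k (pc C x f)"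
  by (simp add: pc_def emb_def)

definition decomp where
  "decomp C D D1 D2 k l \<longleftrightarrow> k < 2 \<and> l < 2 \<and> k \<noteq> l \<and>
     (\<forall>U. colim_step C D U = M k ` colim_step C D1 U \<union> M l ` colim_step C D2 U) \<and>
     (\<forall>U. colim_dom C D U = emb k ` colim_dom C D1 U \<union> emb l ` colim_dom C D2 U)"

lemma decomp_sym: "decomp C D D1 D2 k l \<Longrightarrow> decomp C D D2 D1 l k"
  unfolding decomp_def by auto

lemma rt_disj:
  assumes kl: "k < 2" "l < 2" "k \<noteq> l"
    and R: "R = M k ` R1 \<union> M l ` R2"
    and ab: "(a, b) \<in> R\<^sup>*" and a: "a = emb k x"
  shows "\<exists>y. b = emb k y \<and> (x, y) \<in> R1\<^sup>*"
  using ab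
proof (induction rule: rtrancl_induct)
  case base then show ?case using a by (intro exI[of _ x]) simp
next
  case (step b c)
  then obtain y where y: "b = emb k y" "(x, y) \<in> R1\<^sup>*" by auto
  from step(2) have "(b, c) \<in> M k ` R1 \<union> M l ` R2" using R by simp
  then show ?case
  proof
    assume "(b, c) \<in> M k ` R1"
    then obtain y' z where "(y', z) \<in> R1" "b = emb k y'" "c = emb k z" by (auto simp: M_def)
    then show ?thesis using y emb_inj by (metis rtrancl.rtrancl_into_rtrancl)
  next
    assume "(b, c) \<in> M l ` R2"
    then obtain y' where "b = emb l y'" by (auto simp: M_def)
    then show ?thesis using y emb_disj[OF kl] by metis
  qed
qed

lemma rt_mono:
  assumes "(x, y) \<in> R1\<^sup>*" "M k ` R1 \<subseteq> R"
  shows "(emb k x, emb k y) \<in> R\<^sup>*"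
  using assms(1)
proof (induction rule: rtrancl_induct)
  case base then show ?case by simp
next
  case (step y z)
  then have "(emb k y, emb k z) \<in> R" using assms(2) by (force simp: M_def)
  with step.IH show ?case by simp
qed

lemma decomp_SS:
  assumes "decomp C D D1 D2 k l"
  shows "SS C D U = M k ` SS C D1 U \<union> M l ` SS C D2 U"
proof -
  have c: "(M j ` R)\<inverse> = M j ` (R\<inverse>)" for j R
    by (force simp: M_def)
  have "colim_step C D U = M k ` colim_step C D1 U \<union> M l ` colim_step C D2 U"
    using assms unfolding decomp_def by blast
  then show ?thesis by (simp add: converse_Un c image_Un Un_ac)
qed

lemma decomp_dom:
  assumes "decomp C D D1 D2 k l"
  shows "emb k x \<in> colim_dom C D U \<longleftrightarrow> x \<in> colim_dom C D1 U"
proof -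
  have kl: "k < 2" "l < 2" "k \<noteq> l" using assms by (auto simp: decomp_def)
  have "colim_dom C D U = emb k ` colim_dom C D1 U \<union> emb l ` colim_dom C D2 U"
    using assms by (auto simp: decomp_def)
  moreover have "emb k x \<in> emb k ` A \<longleftrightarrow> x \<in> A" for A by (auto simp: image_iff emb_inj)
  moreover have "emb k x \<notin> emb l ` B" for B using emb_disj[OF kl, of x] by (auto simp: image_iff)
  ultimately show ?thesis by simp
qed

lemma decomp_class:
  assumes "decomp C D D1 D2 k l"
  shows "colim_eq C D U `` {emb k x} = emb k ` (colim_eq C D1 U `` {x})"
proof -
  have kl: "k < 2" "l < 2" "k \<noteq> l" using assms by (auto simp: decomp_def)
  have SS: "SS C D U = M k ` SS C D1 U \<union> M l ` SS C D2 U" using decomp_SS[OF assms] .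
  show ?thesis
  proof (intro set_eqI iffI)
    fix b assume "b \<in> colim_eq C D U `` {emb k x}"
    then have b: "(emb k x, b) \<in> (SS C D U)\<^sup>*" "emb k x \<in> colim_dom C D U" "b \<in> colim_dom C D U"
      by (auto simp: colim_eq_def)
    obtain y where y: "b = emb k y" "(x, y) \<in> (SS C D1 U)\<^sup>*"
      using rt_disj[OF kl SS b(1) refl] by blast
    then show "b \<in> emb k ` (colim_eq C D1 U `` {x})"
      using b(2,3) decomp_dom[OF assms] by (auto simp: colim_eq_def)
  next
    fix b assume "b \<in> emb k ` (colim_eq C D1 U `` {x})"
    then obtain y where y: "b = emb k y" "(x, y) \<in> (SS C D1 U)\<^sup>*" "x \<in> colim_dom C D1 U" "y \<in> colim_dom C D1 U"
      by (auto simp: colim_eq_def)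
    have "(emb k x, emb k y) \<in> (SS C D U)\<^sup>*" using rt_mono[OF y(2)] SS by blast
    then show "b \<in> colim_eq C D U `` {emb k x}"
      using y decomp_dom[OF assms] by (auto simp: colim_eq_def)
  qed
qed

lemma decomp_Xs:
  assumes "decomp C D D1 D2 k l" "c \<in> Xs (colim C D1) U"
  shows "emb k ` c \<in> Xs (colim C D) U"
proof -
  from assms(2) have U: "U \<in> obs C" by (simp add: Xs_colim split: if_splits)
  from assms(2) U obtain x where x: "x \<in> colim_dom C D1 U" "c = colim_eq C D1 U `` {x}"
    by (auto simp: Xs_colim elim: quotientE)
  have "emb k ` c = colim_eq C D U `` {emb k x}" using decomp_class[OF assms(1)] x(2) by simp
  then show ?thesis using U x(1) decomp_dom[OF assms(1)] by (simp add: Xs_colim quotientI)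
qed

lemma decomp_surj:
  assumes "decomp C D D1 D2 k l" "y \<in> Xs (colim C D) U"
  shows "(\<exists>c\<in>Xs (colim C D1) U. y = emb k ` c) \<or> (\<exists>c\<in>Xs (colim C D2) U. y = emb l ` c)"
proof -
  from assms(2) have U: "U \<in> obs C" by (simp add: Xs_colim split: if_splits)
  from assms(2) U obtain z where z: "z \<in> colim_dom C D U" "y = colim_eq C D U `` {z}"
    by (auto simp: Xs_colim elim: quotientE)
  have "colim_dom C D U = emb k ` colim_dom C D1 U \<union> emb l ` colim_dom C D2 U"
    using assms(1) by (auto simp: decomp_def)
  with z(1) consider x where "x \<in> colim_dom C D1 U" "z = emb k x" | x where "x \<in> colim_dom C D2 U" "z = emb l x"
    by blast
  then show ?thesis
  proof cases
    case 1
    have "colim_eq C D1 U `` {x} \<in> Xs (colim C D1) U" using U 1 by (simp add: Xs_colim quotientI)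
    moreover have "y = emb k ` (colim_eq C D1 U `` {x})" using decomp_class[OF assms(1)] z(2) 1 by simp
    ultimately show ?thesis by blast
  next
    case 2
    have "colim_eq C D2 U `` {x} \<in> Xs (colim C D2) U" using U 2 by (simp add: Xs_colim quotientI)
    moreover have "y = emb l ` (colim_eq C D2 U `` {x})" using decomp_class[OF decomp_sym[OF assms(1)]] z(2) 2 by simp
    ultimately show ?thesis by blast
  qed
qed

lemma colim_nonempty:
  assumes "good_diag C D" "is_cat C" "c \<in> Xs (colim C D) U"
  shows "c \<noteq> {}"
proof -
  from assms(3) have U: "U \<in> obs C" by (simp add: Xs_colim split: if_splits)
  from assms(3) U obtain x where x: "x \<in> colim_dom C D U" "c = colim_eq C D U `` {x}"
    by (auto simp: Xs_colim elim: quotientE)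
  then show ?thesis using equiv_class_self[OF equiv_colim[OF assms(1,2)] x(1)] by auto
qed

lemma decomp_disj:
  assumes "decomp C D D1 D2 k l" "good_diag C D1" "is_cat C"
    "c \<in> Xs (colim C D1) U"
  shows "emb k ` c \<noteq> emb l ` c'"
proof -
  have kl: "k < 2" "l < 2" "k \<noteq> l" using assms by (auto simp: decomp_def)
  obtain x where "x \<in> c" using colim_nonempty[OF assms(2,3,4)] by blast
  then show ?thesis using emb_disj[OF kl] by (metis image_eqI imageE)
qed

lemma decomp_inj:
  "emb k ` c = emb k ` c' \<Longrightarrow> c = c'"
  by (metis emb_inj inj_def inj_image_eq_iff)

lemma decomp_nat:
  assumes "decomp C D D1 D2 k l" "good_diag C D" "good_diag C D1" "is_cat C"
    "f \<in> mors C" "c \<in> Xs (colim C D1) (cd C f)"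
  shows "act (colim C D) f (emb k ` c) = emb k ` (act (colim C D1) f c)"
proof -
  have fh: "f \<in> hom C (dm C f) (cd C f)" using assms(5) by (simp add: hom_def)
  from assms(6) have U: "cd C f \<in> obs C" by (simp add: Xs_colim split: if_splits)
  from assms(6) U obtain x where x: "x \<in> colim_dom C D1 (cd C f)" "c = colim_eq C D1 (cd C f) `` {x}"
    by (auto simp: Xs_colim elim: quotientE)
  have ex: "emb k x \<in> colim_dom C D (cd C f)" using decomp_dom[OF assms(1)] x(1) by simp
  have "act (colim C D) f (emb k ` c) = act (colim C D) f (colim_eq C D (cd C f) `` {emb k x})"
    using decomp_class[OF assms(1)] x(2) by simp
  also have "\<dots> = colim_eq C D (dm C f) `` {emb k (pc C x f)}"
    using act_class[OF assms(2,4) ex fh] by (simp add: pc_emb)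
  also have "\<dots> = emb k ` (colim_eq C D1 (dm C f) `` {pc C x f})" using decomp_class[OF assms(1)] .
  also have "\<dots> = emb k ` (act (colim C D1) f c)" using act_class[OF assms(3,4) x(1) fh] x(2) by simp
  finally show ?thesis .
qed

definition ecat :: "(nat,nat) cat \<Rightarrow> (nat,nat) cat \<Rightarrow> (nat,nat) cat" where
  "ecat E1 E2 = \<lparr> obs = (\<lambda>n. 2*n) ` obs E1 \<union> (\<lambda>n. 1 + 2*n) ` obs E2,
     mors = (\<lambda>n. 2*n) ` mors E1 \<union> (\<lambda>n. 1 + 2*n) ` mors E2,
     dm = (\<lambda>m. if even m then 2 * dm E1 (m div 2) else 1 + 2 * dm E2 (m div 2)),
     cd = (\<lambda>m. if even m then 2 * cd E1 (m div 2) else 1 + 2 * cd E2 (m div 2)),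
     cmp = (\<lambda>g f. if even g then 2 * cmp E1 (g div 2) (f div 2) else 1 + 2 * cmp E2 (g div 2) (f div 2)),
     idt = (\<lambda>e. if even e then 2 * idt E1 (e div 2) else 1 + 2 * idt E2 (e div 2)) \<rparr>"

definition esel :: "(nat \<Rightarrow> 'a) \<Rightarrow> (nat \<Rightarrow> 'a) \<Rightarrow> nat \<Rightarrow> 'a" where
  "esel F1 F2 n = (if even n then F1 (n div 2) else F2 (n div 2))"

lemma mem_ev: "((m::nat) \<in> (\<lambda>n. 2*n) ` A) = (even m \<and> m div 2 \<in> A)"
  by (auto elim!: evenE)
lemma mem_od: "((m::nat) \<in> (\<lambda>n. 1 + 2*n) ` A) = (odd m \<and> m div 2 \<in> A)"
  by (auto elim!: oddE)
lemma mem_od': "((m::nat) \<in> (\<lambda>n. Suc (2*n)) ` A) = (odd m \<and> m div 2 \<in> A)"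
  using mem_od[of m A] by simp

lemma ecat_simps:
  "obs (ecat E1 E2) = (\<lambda>n. 2*n) ` obs E1 \<union> (\<lambda>n. 1 + 2*n) ` obs E2"
  "mors (ecat E1 E2) = (\<lambda>n. 2*n) ` mors E1 \<union> (\<lambda>n. 1 + 2*n) ` mors E2"
  "dm (ecat E1 E2) m = (if even m then 2 * dm E1 (m div 2) else 1 + 2 * dm E2 (m div 2))"
  "cd (ecat E1 E2) m = (if even m then 2 * cd E1 (m div 2) else 1 + 2 * cd E2 (m div 2))"
  "cmp (ecat E1 E2) g f = (if even g then 2 * cmp E1 (g div 2) (f div 2) else 1 + 2 * cmp E2 (g div 2) (f div 2))"
  "idt (ecat E1 E2) e = (if even e then 2 * idt E1 (e div 2) else 1 + 2 * idt E2 (e div 2))"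
  by (simp_all add: ecat_def)

lemma ecat_cat:
  assumes c1: "is_cat E1" and c2: "is_cat E2"
  shows "is_cat (ecat E1 E2)"
proof -
  have A: "\<forall>f\<in>mors E. dm E f \<in> obs E \<and> cd E f \<in> obs E" if "is_cat E" for E :: "(nat,nat) cat"
    using that unfolding is_cat_def by blast
  have B: "\<forall>U\<in>obs E. idt E U \<in> hom E U U" if "is_cat E" for E :: "(nat,nat) cat"
    using that unfolding is_cat_def by blast
  have Cc: "\<forall>f\<in>mors E. \<forall>g\<in>mors E. dm E g = cd E f \<longrightarrow> cmp E g f \<in> hom E (dm E f) (cd E g)" if "is_cat E" for E :: "(nat,nat) cat"
    using that unfolding is_cat_def by blast
  have Dd: "\<forall>f\<in>mors E. cmp E f (idt E (dm E f)) = f \<and> cmp E (idt E (cd E f)) f = f" if "is_cat E" for E :: "(nat,nat) cat"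
    using that unfolding is_cat_def by blast
  have Ee: "\<forall>f\<in>mors E. \<forall>g\<in>mors E. \<forall>h\<in>mors E. dm E g = cd E f \<longrightarrow> dm E h = cd E g \<longrightarrow>
        cmp E h (cmp E g f) = cmp E (cmp E h g) f" if "is_cat E" for E :: "(nat,nat) cat"
    using that unfolding is_cat_def by blast
  let ?E = "ecat E1 E2"
  have idlaws: "cmp ?E f (idt ?E (dm ?E f)) = f \<and> cmp ?E (idt ?E (cd ?E f)) f = f" if "f \<in> mors ?E" for f
  proof -
    from that consider k where "f = 2 * k" "k \<in> mors E1" | k where "f = Suc (2 * k)" "k \<in> mors E2"
      by (auto simp: ecat_simps)
    then show ?thesis
    proof cases
      case 1 then show ?thesis using Dd[OF c1] by (simp add: ecat_simps)
    next
      case 2 then show ?thesis using Dd[OF c2] by (simp add: ecat_simps)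
    qed
  qed
  show ?thesis unfolding is_cat_def
  proof (intro conjI ballI impI)
    fix f assume "f \<in> mors ?E"
    then show "dm ?E f \<in> obs ?E" "cd ?E f \<in> obs ?E"
      using A[OF c1] A[OF c2] by (auto simp: ecat_simps mem_ev mem_od mem_od')
  next
    fix U assume "U \<in> obs ?E"
    then have "(even U \<and> U div 2 \<in> obs E1) \<or> (odd U \<and> U div 2 \<in> obs E2)" by (simp add: ecat_simps mem_ev mem_od mem_od')
    moreover have "even U \<Longrightarrow> 2 * (U div 2) = U" "odd U \<Longrightarrow> 1 + 2 * (U div 2) = U" by presburger+
    ultimately show "idt ?E U \<in> hom ?E U U"
      using B[OF c1] B[OF c2] by (auto simp: ecat_simps mem_ev mem_od mem_od' hom_def)
  next
    fix f g assume f: "f \<in> mors ?E" and g: "g \<in> mors ?E" and e: "dm ?E g = cd ?E f"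
    from f g e have "(even f \<and> even g) \<or> (odd f \<and> odd g)"
      by (auto simp: ecat_simps mem_ev mem_od mem_od' split: if_splits) presburger+
    then show "cmp ?E g f \<in> hom ?E (dm ?E f) (cd ?E g)"
      using f g e Cc[OF c1] Cc[OF c2] by (auto simp: ecat_simps mem_ev mem_od mem_od' hom_def)
  next
    fix f assume "f \<in> mors ?E"
    then show "cmp ?E f (idt ?E (dm ?E f)) = f" using idlaws by blast
  next
    fix f assume "f \<in> mors ?E"
    then show "cmp ?E (idt ?E (cd ?E f)) f = f" using idlaws by blast
  next
    fix f g h assume f: "f \<in> mors ?E" and g: "g \<in> mors ?E" and h: "h \<in> mors ?E"
      and e1: "dm ?E g = cd ?E f" and e2: "dm ?E h = cd ?E g"
    from f g e1 have "(even f \<and> even g) \<or> (odd f \<and> odd g)"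
      by (auto simp: ecat_simps mem_ev mem_od mem_od' split: if_splits) presburger+
    moreover from h g e2 have "(even h \<and> even g) \<or> (odd h \<and> odd g)"
      by (auto simp: ecat_simps mem_ev mem_od mem_od' split: if_splits) presburger+
    ultimately show "cmp ?E h (cmp ?E g f) = cmp ?E (cmp ?E h g) f"
      using f g h e1 e2 Ee[OF c1] Ee[OF c2] by (auto simp: ecat_simps mem_ev mem_od mem_od')
  qed
qed

lemma esel_simps[simp]: "esel F1 F2 (2 * k) = F1 k" "esel F1 F2 (Suc (2 * k)) = F2 k"
  by (simp_all add: esel_def)

lemma ecat_mors_cases:
  assumes "f \<in> mors (ecat E1 E2)"
  obtains k where "f = 2 * k" "k \<in> mors E1" | k where "f = Suc (2 * k)" "k \<in> mors E2"
  using assms by (auto simp: ecat_simps)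

lemma ecat_obs_cases:
  assumes "f \<in> obs (ecat E1 E2)"
  obtains k where "f = 2 * k" "k \<in> obs E1" | k where "f = Suc (2 * k)" "k \<in> obs E2"
  using assms by (auto simp: ecat_simps)

lemma ecat_finite: "finite (obs E1) \<Longrightarrow> finite (obs E2) \<Longrightarrow> finite (obs (ecat E1 E2))"
  "finite (mors E1) \<Longrightarrow> finite (mors E2) \<Longrightarrow> finite (mors (ecat E1 E2))"
  by (simp_all add: ecat_simps)

lemma ecat_functor:
  assumes f1: "is_functor E1 C Gob1 Gmor1" and f2: "is_functor E2 C Gob2 Gmor2"
  shows "is_functor (ecat E1 E2) C (esel Gob1 Gob2) (esel Gmor1 Gmor2)"
  unfolding is_functor_def
proof (intro conjI ballI impI)
  fix e assume "e \<in> obs (ecat E1 E2)"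
  then show "esel Gob1 Gob2 e \<in> obs C"
    by (cases rule: ecat_obs_cases) (use f1 f2 in \<open>auto simp: is_functor_def\<close>)
next
  fix a assume "a \<in> mors (ecat E1 E2)"
  then show "esel Gmor1 Gmor2 a \<in> hom C (esel Gob1 Gob2 (dm (ecat E1 E2) a)) (esel Gob1 Gob2 (cd (ecat E1 E2) a))"
    by (cases rule: ecat_mors_cases) (use f1 f2 in \<open>auto simp: is_functor_def ecat_simps\<close>)
next
  fix e assume "e \<in> obs (ecat E1 E2)"
  then show "esel Gmor1 Gmor2 (idt (ecat E1 E2) e) = idt C (esel Gob1 Gob2 e)"
    by (cases rule: ecat_obs_cases) (use f1 f2 in \<open>auto simp: is_functor_def ecat_simps\<close>)
next
  fix a b assume a: "a \<in> mors (ecat E1 E2)" and b: "b \<in> mors (ecat E1 E2)"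
    and e: "dm (ecat E1 E2) b = cd (ecat E1 E2) a"
  from a show "esel Gmor1 Gmor2 (cmp (ecat E1 E2) b a) = cmp C (esel Gmor1 Gmor2 b) (esel Gmor1 Gmor2 a)"
  proof (cases rule: ecat_mors_cases)
    case (1 k)
    from b show ?thesis
    proof (cases rule: ecat_mors_cases)
      case (1 k') then show ?thesis using \<open>a = 2 * k\<close> \<open>k \<in> mors E1\<close> e f1
        by (auto simp: is_functor_def ecat_simps)
    next
      case (2 k') then show ?thesis using \<open>a = 2 * k\<close> e by (simp add: ecat_simps) presburger
    qed
  next
    case (2 k)
    from b show ?thesis
    proof (cases rule: ecat_mors_cases)
      case (1 k') then show ?thesis using \<open>a = Suc (2 * k)\<close> e by (simp add: ecat_simps) presburger
    next
      case (2 k') then show ?thesis using \<open>a = Suc (2 * k)\<close> \<open>k \<in> mors E2\<close> e f2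
        by (auto simp: is_functor_def ecat_simps)
    qed
  qed
qed

lemma functor_good:
  assumes "is_cat E" "is_functor E C Gob Gmor"
  shows "good_diag C (functor_diagram E Gob Gmor)"
  using assms unfolding good_diag_def functor_diagram_def is_cat_def is_functor_def by auto

lemma step_mem: "a \<in> DA D \<Longrightarrow> h \<in> hom C U (Dob D (Ds D a)) \<Longrightarrow>
   ((Ds D a, h), (Dt D a, cmp C (Dmor D a) h)) \<in> colim_step C D U"
  unfolding colim_step_def by blast

lemma ecat_decomp:
  shows "decomp C (functor_diagram (ecat E1 E2) (esel Gob1 Gob2) (esel Gmor1 Gmor2))
     (functor_diagram E1 Gob1 Gmor1) (functor_diagram E2 Gob2 Gmor2) 0 1"
  unfolding decomp_def
proof (intro conjI allI)
  fix U
  let ?D = "functor_diagram (ecat E1 E2) (esel Gob1 Gob2) (esel Gmor1 Gmor2)"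
  let ?D1 = "functor_diagram E1 Gob1 Gmor1" and ?D2 = "functor_diagram E2 Gob2 Gmor2"
  show "colim_step C ?D U = M 0 ` colim_step C ?D1 U \<union> M 1 ` colim_step C ?D2 U"
  proof (intro set_eqI iffI)
    fix p assume "p \<in> colim_step C ?D U"
    then obtain a h where ah: "a \<in> mors (ecat E1 E2)" "h \<in> hom C U (esel Gob1 Gob2 (dm (ecat E1 E2) a))"
      "p = ((dm (ecat E1 E2) a, h), (cd (ecat E1 E2) a, cmp C (esel Gmor1 Gmor2 a) h))"
      by (auto simp: colim_step_def functor_diagram_def)
    from ah(1) show "p \<in> M 0 ` colim_step C ?D1 U \<union> M 1 ` colim_step C ?D2 U"
    proof (cases rule: ecat_mors_cases)
      case (1 k)
      have "((dm E1 k, h), (cd E1 k, cmp C (Gmor1 k) h)) \<in> colim_step C ?D1 U"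
        using 1 ah by (auto simp: colim_step_def functor_diagram_def ecat_simps)
      moreover have "p = M 0 ((dm E1 k, h), (cd E1 k, cmp C (Gmor1 k) h))"
        using 1 ah by (simp add: M_def emb_def ecat_simps)
      ultimately show ?thesis by blast
    next
      case (2 k)
      have "((dm E2 k, h), (cd E2 k, cmp C (Gmor2 k) h)) \<in> colim_step C ?D2 U"
        using 2 ah by (auto simp: colim_step_def functor_diagram_def ecat_simps)
      moreover have "p = M 1 ((dm E2 k, h), (cd E2 k, cmp C (Gmor2 k) h))"
        using 2 ah by (simp add: M_def emb_def ecat_simps)
      ultimately show ?thesis by blast
    qed
  next
    fix p assume "p \<in> M 0 ` colim_step C ?D1 U \<union> M 1 ` colim_step C ?D2 U"
    then show "p \<in> colim_step C ?D U"
    proof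
      assume "p \<in> M 0 ` colim_step C ?D1 U"
      then obtain k h where kh: "k \<in> mors E1" "h \<in> hom C U (Gob1 (dm E1 k))"
        "p = M 0 ((dm E1 k, h), (cd E1 k, cmp C (Gmor1 k) h))"
        by (auto simp: colim_step_def functor_diagram_def)
      have "2 * k \<in> mors (ecat E1 E2)" using kh by (simp add: ecat_simps)
      moreover have "p = ((dm (ecat E1 E2) (2*k), h), (cd (ecat E1 E2) (2*k), cmp C (esel Gmor1 Gmor2 (2*k)) h))"
        using kh by (simp add: M_def emb_def ecat_simps)
      moreover have "h \<in> hom C U (esel Gob1 Gob2 (dm (ecat E1 E2) (2*k)))" using kh by (simp add: ecat_simps)
      ultimately show ?thesis using step_mem[of "2*k" ?D h C U] by (simp add: functor_diagram_def)
    next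
      assume "p \<in> M 1 ` colim_step C ?D2 U"
      then obtain k h where kh: "k \<in> mors E2" "h \<in> hom C U (Gob2 (dm E2 k))"
        "p = M 1 ((dm E2 k, h), (cd E2 k, cmp C (Gmor2 k) h))"
        by (auto simp: colim_step_def functor_diagram_def)
      have "Suc (2 * k) \<in> mors (ecat E1 E2)" using kh by (simp add: ecat_simps)
      moreover have "p = ((dm (ecat E1 E2) (Suc (2*k)), h), (cd (ecat E1 E2) (Suc (2*k)), cmp C (esel Gmor1 Gmor2 (Suc (2*k))) h))"
        using kh by (simp add: M_def emb_def ecat_simps)
      moreover have "h \<in> hom C U (esel Gob1 Gob2 (dm (ecat E1 E2) (Suc (2*k))))" using kh by (simp add: ecat_simps)
      ultimately show ?thesis using step_mem[of "Suc (2*k)" ?D h C U] by (simp add: functor_diagram_def)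
    qed
  qed
  show "colim_dom C ?D U = emb 0 ` colim_dom C ?D1 U \<union> emb 1 ` colim_dom C ?D2 U"
  proof (intro set_eqI iffI)
    fix p assume "p \<in> colim_dom C ?D U"
    then obtain j h where jh: "j \<in> obs (ecat E1 E2)" "h \<in> hom C U (esel Gob1 Gob2 j)" "p = (j, h)"
      by (auto simp: colim_dom_def functor_diagram_def)
    from jh(1) show "p \<in> emb 0 ` colim_dom C ?D1 U \<union> emb 1 ` colim_dom C ?D2 U"
    proof (cases rule: ecat_obs_cases)
      case (1 k)
      then have "(k, h) \<in> colim_dom C ?D1 U" "p = emb 0 (k, h)"
        using jh by (auto simp: colim_dom_def functor_diagram_def emb_def)
      then show ?thesis by blast
    next
      case (2 k)
      then have "(k, h) \<in> colim_dom C ?D2 U" "p = emb 1 (k, h)"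
        using jh by (auto simp: colim_dom_def functor_diagram_def emb_def)
      then show ?thesis by blast
    qed
  next
    fix p assume "p \<in> emb 0 ` colim_dom C ?D1 U \<union> emb 1 ` colim_dom C ?D2 U"
    then show "p \<in> colim_dom C ?D U"
    proof
      assume "p \<in> emb 0 ` colim_dom C ?D1 U"
      then obtain k h where "p = (2 * k, h)" "k \<in> obs E1" "h \<in> hom C U (Gob1 k)"
        by (auto simp: colim_dom_def functor_diagram_def emb_def)
      then show ?thesis by (simp add: colim_dom_def functor_diagram_def ecat_simps)
    next
      assume "p \<in> emb 1 ` colim_dom C ?D2 U"
      then obtain k h where "p = (Suc (2 * k), h)" "k \<in> obs E2" "h \<in> hom C U (Gob2 k)"
        by (auto simp: colim_dom_def functor_diagram_def emb_def)
      then show ?thesis by (simp add: colim_dom_def functor_diagram_def ecat_simps)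
    qed
  qed
qed simp_all

lemma decomp_kl: "decomp C D D1 D2 k l \<Longrightarrow> k < 2 \<and> l < 2 \<and> k \<noteq> l"
  unfolding decomp_def by blast

lemma psh_act: "is_presheaf C X \<Longrightarrow> f \<in> mors C \<Longrightarrow> x \<in> Xs X (cd C f) \<Longrightarrow> act X f x \<in> Xs X (dm C f)"
  unfolding is_presheaf_def by blast

lemma side_in:
  fixes C :: "('o,'m,'z) dcat_scheme" and X X1 :: "('o,'m) tobj"
  assumes dc: "decomp C D D1 D2 k l" and gd: "good_diag C D" and gd1: "good_diag C D1" and cat: "is_cat C"
    and XD: "Xs X = Xs (colim C D)" "act X = act (colim C D)"
    and eta1: "psh_hom C X1 (colim C D1) \<eta>1"
    and stX: "\<And>U x. (U, x) \<in> st X1 \<Longrightarrow> (U, emb k ` \<eta>1 U x) \<in> st X"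
    and acX: "\<And>U x. (U, x) \<in> ac X1 \<Longrightarrow> (U, emb k ` \<eta>1 U x) \<in> ac X"
  shows "Lang C X1 \<subseteq> Lang C X"
proof
  fix G assume "G \<in> Lang C X1"
  then obtain \<zeta> where G: "track_object C G" "aut_hom C G X1 \<zeta>" unfolding Lang_def aut_le_def by blast
  have iota: "psh_hom C (colim C D1) X (\<lambda>U c. emb k ` c)"
    unfolding psh_hom_def XD using decomp_Xs[OF dc] decomp_nat[OF dc gd gd1 cat] by auto
  have "psh_hom C G X (\<lambda>U x. emb k ` \<eta>1 U (\<zeta> U x))"
    using psh_hom_comp[OF psh_hom_comp[OF _ eta1] iota] G(2) unfolding aut_hom_def by blast
  moreover have "\<forall>(U, x)\<in>st G. (U, emb k ` \<eta>1 U (\<zeta> U x)) \<in> st X"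
    using G(2) stX unfolding aut_hom_def by auto
  moreover have "\<forall>(U, x)\<in>ac G. (U, emb k ` \<eta>1 U (\<zeta> U x)) \<in> ac X"
    using G(2) acX unfolding aut_hom_def by auto
  ultimately show "G \<in> Lang C X" using G(1) unfolding Lang_def aut_le_def aut_hom_def by blast
qed

lemma side_out:
  fixes C :: "('o,'m,'z) dcat_scheme" and X X1 :: "('o,'m) tobj" and G :: "('o,'m) tobj"
  assumes dc: "decomp C D D1 D2 k l" and gd: "good_diag C D" and gd1: "good_diag C D1" and gd2: "good_diag C D2"
    and cat: "is_cat C"
    and XD: "Xs X = Xs (colim C D)" "act X = act (colim C D)"
    and eta1: "psh_hom C X1 (colim C D1) \<eta>1" and theta1: "psh_hom C (colim C D1) X1 \<theta>1"
    and inv1: "\<forall>U x. x \<in> Xs X1 U \<longrightarrow> \<theta>1 U (\<eta>1 U x) = x"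
    and aut1: "is_automaton C X1"
    and stX: "st X = (\<lambda>(U, x). (U, emb k ` \<eta>1 U x)) ` st X1 \<union> (\<lambda>(U, x). (U, emb l ` \<eta>2 U x)) ` st X2"
    and acX: "ac X = (\<lambda>(U, x). (U, emb k ` \<eta>1 U x)) ` ac X1 \<union> (\<lambda>(U, x). (U, emb l ` \<eta>2 U x)) ` ac X2"
    and G: "track_object C G" and xi: "aut_hom C G X \<xi>"
    and s: "(U0, s) \<in> st G" and x0: "(U0, x0) \<in> st X1" and xis: "\<xi> U0 s = emb k ` \<eta>1 U0 x0"
  shows "G \<in> Lang C X1"
proof -
  define P where "P U y \<longleftrightarrow> (\<exists>c\<in>Xs (colim C D1) U. y = emb k ` c)" for U y
  have psh2: "is_presheaf C (colim C D2)" using presheaf_colim[OF gd2 cat] .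
  have notP: "\<not> P U (emb l ` c')" for c' U
  proof
    assume "P U (emb l ` c')"
    then obtain c where c: "c \<in> Xs (colim C D1) U" "emb l ` c' = emb k ` c" by (auto simp: P_def)
    from decomp_disj[OF dc gd1 cat c(1), of c'] c(2) show False by simp
  qed
  have clo: "\<forall>f\<in>mors C. \<forall>y\<in>Xs X (cd C f). P (cd C f) y \<longleftrightarrow> P (dm C f) (act X f y)"
  proof (intro ballI)
    fix f y assume f: "f \<in> mors C" and y: "y \<in> Xs X (cd C f)"
    from decomp_surj[OF dc y[unfolded XD]]
    show "P (cd C f) y \<longleftrightarrow> P (dm C f) (act X f y)"
    proof
      assume "\<exists>c\<in>Xs (colim C D1) (cd C f). y = emb k ` c"
      then obtain c where c: "c \<in> Xs (colim C D1) (cd C f)" "y = emb k ` c" by blast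
      have "act X f y = emb k ` act (colim C D1) f c" using decomp_nat[OF dc gd gd1 cat f c(1)] c(2) XD by simp
      moreover have "act (colim C D1) f c \<in> Xs (colim C D1) (dm C f)"
        using psh_act[OF presheaf_colim[OF gd1 cat] f c(1)] .
      ultimately have "P (dm C f) (act X f y)" unfolding P_def by blast
      moreover have "P (cd C f) y" unfolding P_def using c by blast
      ultimately show ?thesis by simp
    next
      assume "\<exists>c\<in>Xs (colim C D2) (cd C f). y = emb l ` c"
      then obtain c where c: "c \<in> Xs (colim C D2) (cd C f)" "y = emb l ` c" by blast
      have "act X f y = emb l ` act (colim C D2) f c"
        using decomp_nat[OF decomp_sym[OF dc] gd gd2 cat f c(1)] c(2) XD by simp
      moreover have "act (colim C D2) f c \<in> Xs (colim C D2) (dm C f)"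
        using psh_act[OF psh2 f c(1)] .
      ultimately show ?thesis using c notP by simp
    qed
  qed
  have xiX: "\<And>U x. x \<in> Xs G U \<Longrightarrow> \<xi> U x \<in> Xs X U"
    and xin: "\<And>f x. f \<in> mors C \<Longrightarrow> x \<in> Xs G (cd C f) \<Longrightarrow> \<xi> (dm C f) (act G f x) = act X f (\<xi> (cd C f) x)"
    using xi unfolding aut_hom_def psh_hom_def by auto
  have ps: "psh_hom C G X \<xi>" using xi unfolding aut_hom_def by blast
  have x0X: "x0 \<in> Xs X1 U0" using aut1 x0 unfolding is_automaton_def elems_def by auto
  have PU0: "P U0 (\<xi> U0 s)" unfolding P_def xis using eta1 x0X unfolding psh_hom_def by blast
  have Pall: "x \<in> Xs G U \<Longrightarrow> P U (\<xi> U x)" for U x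
    using tobj_conn[OF cat G ps clo s] PU0 by blast
  define \<rho> where "\<rho> U y = (SOME c. c \<in> Xs (colim C D1) U \<and> y = emb k ` c)" for U y
  have rho: "P U y \<Longrightarrow> \<rho> U y \<in> Xs (colim C D1) U \<and> y = emb k ` \<rho> U y" for U y
    unfolding P_def \<rho>_def by (rule someI_ex) blast
  have rho_emb: "c \<in> Xs (colim C D1) U \<Longrightarrow> \<rho> U (emb k ` c) = c" for U c
    using rho[of U "emb k ` c"] decomp_inj unfolding P_def by metis
  define \<zeta> where "\<zeta> U x = \<theta>1 U (\<rho> U (\<xi> U x))" for U x
  have th1X: "\<And>U c. c \<in> Xs (colim C D1) U \<Longrightarrow> \<theta>1 U c \<in> Xs X1 U"
    and th1n: "\<And>f c. f \<in> mors C \<Longrightarrow> c \<in> Xs (colim C D1) (cd C f) \<Longrightarrow>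
        \<theta>1 (dm C f) (act (colim C D1) f c) = act X1 f (\<theta>1 (cd C f) c)"
    using theta1 unfolding psh_hom_def by auto
  have zpsh: "psh_hom C G X1 \<zeta>"
    unfolding psh_hom_def
  proof (intro conjI allI impI ballI)
    fix U x assume "x \<in> Xs G U"
    then show "\<zeta> U x \<in> Xs X1 U" unfolding \<zeta>_def using rho Pall th1X by blast
  next
    fix f x assume f: "f \<in> mors C" and x: "x \<in> Xs G (cd C f)"
    let ?c = "\<rho> (cd C f) (\<xi> (cd C f) x)"
    have c: "?c \<in> Xs (colim C D1) (cd C f)" "\<xi> (cd C f) x = emb k ` ?c" using rho Pall[OF x] by auto
    have "\<xi> (dm C f) (act G f x) = emb k ` act (colim C D1) f ?c"
      using xin[OF f x] c(2) decomp_nat[OF dc gd gd1 cat f c(1)] XD by simp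
    moreover have "act (colim C D1) f ?c \<in> Xs (colim C D1) (dm C f)"
      using psh_act[OF presheaf_colim[OF gd1 cat] f c(1)] .
    ultimately have "\<rho> (dm C f) (\<xi> (dm C f) (act G f x)) = act (colim C D1) f ?c" using rho_emb by simp
    then show "\<zeta> (dm C f) (act G f x) = act X1 f (\<zeta> (cd C f) x)"
      unfolding \<zeta>_def using th1n[OF f c(1)] by simp
  qed
  have autG: "is_automaton C G" using G unfolding track_object_def by blast
  have bk: "x \<in> Xs G U \<Longrightarrow> (U, x1) \<in> S1 \<Longrightarrow> \<xi> U x = emb k ` \<eta>1 U x1 \<Longrightarrow> S1 \<subseteq> elems X1 \<Longrightarrow> \<zeta> U x = x1"
    for U x x1 S1
  proof -
    assume a: "x \<in> Xs G U" "(U, x1) \<in> S1" "\<xi> U x = emb k ` \<eta>1 U x1" "S1 \<subseteq> elems X1"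
    have x1: "x1 \<in> Xs X1 U" using a(2,4) by (auto simp: elems_def)
    have "\<eta>1 U x1 \<in> Xs (colim C D1) U" using eta1 x1 unfolding psh_hom_def by blast
    then show ?thesis unfolding \<zeta>_def using a(3) rho_emb inv1 x1 by simp
  qed
  have stG: "\<forall>(U, x)\<in>st G. (U, \<zeta> U x) \<in> st X1"
  proof (intro ballI, clarify)
    fix U x assume ux: "(U, x) \<in> st G"
    then have xG: "x \<in> Xs G U" using autG unfolding is_automaton_def elems_def by auto
    have "(U, \<xi> U x) \<in> st X" using xi ux unfolding aut_hom_def by auto
    then consider x1 where "(U, x1) \<in> st X1" "\<xi> U x = emb k ` \<eta>1 U x1"
      | x2 where "(U, x2) \<in> st X2" "\<xi> U x = emb l ` \<eta>2 U x2"
      unfolding stX by auto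
    then show "(U, \<zeta> U x) \<in> st X1"
    proof cases
      case 1 then show ?thesis using bk[OF xG 1(1) 1(2)] aut1 unfolding is_automaton_def by auto
    next
      case 2
      have "P U (\<xi> U x)" using Pall[OF xG] .
      then show ?thesis unfolding 2(2) using notP by blast
    qed
  qed
  have acG: "\<forall>(U, x)\<in>ac G. (U, \<zeta> U x) \<in> ac X1"
  proof (intro ballI, clarify)
    fix U x assume ux: "(U, x) \<in> ac G"
    then have xG: "x \<in> Xs G U" using autG unfolding is_automaton_def elems_def by auto
    have "(U, \<xi> U x) \<in> ac X" using xi ux unfolding aut_hom_def by auto
    then consider x1 where "(U, x1) \<in> ac X1" "\<xi> U x = emb k ` \<eta>1 U x1"
      | x2 where "(U, x2) \<in> ac X2" "\<xi> U x = emb l ` \<eta>2 U x2"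
      unfolding acX by auto
    then show "(U, \<zeta> U x) \<in> ac X1"
    proof cases
      case 1 then show ?thesis using bk[OF xG 1(1) 1(2)] aut1 unfolding is_automaton_def by auto
    next
      case 2
      have "P U (\<xi> U x)" using Pall[OF xG] .
      then show ?thesis unfolding 2(2) using notP by blast
    qed
  qed
  show ?thesis unfolding Lang_def aut_le_def aut_hom_def using G zpsh stG acG by blast
qed

lemma fin_gen_cong:
  fixes X Y :: "('o,'m,'x) aut" and C :: "('o,'m,'z) cat_scheme"
  assumes "Xs Y = Xs X" "act Y = act X" "fin_gen C X"
  shows "fin_gen C Y"
proof -
  have "psh_hom C Y Z \<eta> = psh_hom C X Z \<eta>" for Z :: "('o,'m,(nat \<times> 'm) set) aut" and \<eta>
    using assms(1,2) unfolding psh_hom_def by simp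
  moreover have "psh_hom C Z Y \<eta> = psh_hom C Z X \<eta>" for Z :: "('o,'m,(nat \<times> 'm) set) aut" and \<eta>
    using assms(1,2) unfolding psh_hom_def by simp
  ultimately show ?thesis using assms unfolding fin_gen_def psh_iso_def by simp
qed

lemma regular_union:
  fixes C :: "('o,'m,'z) dcat_scheme"
  assumes cat: "is_cat C" and r1: "regular C L1" and r2: "regular C L2"
  shows "regular C (L1 \<union> L2)"
proof -
  obtain X1 :: "('o,'m) tobj" where X1: "finite_type C X1" "L1 = Lang C X1" using r1 unfolding regular_def by blast
  obtain X2 :: "('o,'m) tobj" where X2: "finite_type C X2" "L2 = Lang C X2" using r2 unfolding regular_def by blast
  obtain E1 :: "(nat,nat) cat" and Gob1 :: "nat \<Rightarrow> 'o" and Gmor1 :: "nat \<Rightarrow> 'm" where E1: "is_cat E1" "finite (obs E1)" "finite (mors E1)" "is_functor E1 C Gob1 Gmor1"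
    "psh_iso C X1 (colim C (functor_diagram E1 Gob1 Gmor1))"
    using X1(1) unfolding finite_type_def fin_gen_def by (elim conjE exE) blast
  obtain E2 :: "(nat,nat) cat" and Gob2 :: "nat \<Rightarrow> 'o" and Gmor2 :: "nat \<Rightarrow> 'm" where E2: "is_cat E2" "finite (obs E2)" "finite (mors E2)" "is_functor E2 C Gob2 Gmor2"
    "psh_iso C X2 (colim C (functor_diagram E2 Gob2 Gmor2))"
    using X2(1) unfolding finite_type_def fin_gen_def by (elim conjE exE) blast
  define D1 where "D1 = functor_diagram E1 Gob1 Gmor1"
  define D2 where "D2 = functor_diagram E2 Gob2 Gmor2"
  define D where "D = functor_diagram (ecat E1 E2) (esel Gob1 Gob2) (esel Gmor1 Gmor2)"
  obtain \<eta>1 \<theta>1 where i1: "psh_hom C X1 (colim C D1) \<eta>1" "psh_hom C (colim C D1) X1 \<theta>1"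
    "\<forall>U x. x \<in> Xs X1 U \<longrightarrow> \<theta>1 U (\<eta>1 U x) = x"
    using E1(5) unfolding psh_iso_def D1_def by (elim exE conjE) blast
  obtain \<eta>2 \<theta>2 where i2: "psh_hom C X2 (colim C D2) \<eta>2" "psh_hom C (colim C D2) X2 \<theta>2"
    "\<forall>U x. x \<in> Xs X2 U \<longrightarrow> \<theta>2 U (\<eta>2 U x) = x"
    using E2(5) unfolding psh_iso_def D2_def by (elim exE conjE) blast
  have dc: "decomp C D D1 D2 0 1" unfolding D_def D1_def D2_def by (rule ecat_decomp)
  have dc': "decomp C D D2 D1 1 0" using decomp_sym[OF dc] .
  have Ecat: "is_cat (ecat E1 E2)" using ecat_cat[OF E1(1) E2(1)] .
  have Efun: "is_functor (ecat E1 E2) C (esel Gob1 Gob2) (esel Gmor1 Gmor2)" using ecat_functor[OF E1(4) E2(4)] .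
  have gd: "good_diag C D" unfolding D_def using functor_good[OF Ecat Efun] .
  have gd1: "good_diag C D1" unfolding D1_def using functor_good[OF E1(1,4)] .
  have gd2: "good_diag C D2" unfolding D2_def using functor_good[OF E2(1,4)] .
  define X :: "('o,'m) tobj" where "X = (colim C D)\<lparr>
     st := (\<lambda>(U, x). (U, emb 0 ` \<eta>1 U x)) ` st X1 \<union> (\<lambda>(U, x). (U, emb 1 ` \<eta>2 U x)) ` st X2,
     ac := (\<lambda>(U, x). (U, emb 0 ` \<eta>1 U x)) ` ac X1 \<union> (\<lambda>(U, x). (U, emb 1 ` \<eta>2 U x)) ` ac X2 \<rparr>"
  have XD: "Xs X = Xs (colim C D)" "act X = act (colim C D)" by (simp_all add: X_def)
  have stX: "st X = (\<lambda>(U, x). (U, emb 0 ` \<eta>1 U x)) ` st X1 \<union> (\<lambda>(U, x). (U, emb 1 ` \<eta>2 U x)) ` st X2"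
    and acX: "ac X = (\<lambda>(U, x). (U, emb 0 ` \<eta>1 U x)) ` ac X1 \<union> (\<lambda>(U, x). (U, emb 1 ` \<eta>2 U x)) ` ac X2"
    by (simp_all add: X_def)
  have aut1: "is_automaton C X1" and aut2: "is_automaton C X2"
    using X1(1) X2(1) unfolding finite_type_def by auto
  have psh: "is_presheaf C X"
    using presheaf_colim[OF gd cat] unfolding is_presheaf_def XD .
  have emb1X: "(U, x) \<in> elems X1 \<Longrightarrow> (U, emb 0 ` \<eta>1 U x) \<in> elems X" for U x
    using decomp_Xs[OF dc] i1(1) XD unfolding elems_def psh_hom_def by auto
  have emb2X: "(U, x) \<in> elems X2 \<Longrightarrow> (U, emb 1 ` \<eta>2 U x) \<in> elems X" for U x
    using decomp_Xs[OF dc'] i2(1) XD unfolding elems_def psh_hom_def by auto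
  have stE: "st X \<subseteq> elems X" unfolding stX using aut1 aut2 emb1X emb2X unfolding is_automaton_def by auto
  have acE: "ac X \<subseteq> elems X" unfolding acX using aut1 aut2 emb1X emb2X unfolding is_automaton_def by auto
  have fg: "fin_gen C X"
  proof -
    have "psh_iso C X (colim C D)"
      unfolding psh_iso_def psh_hom_def XD by (rule exI[of _ "\<lambda>U x. x"], rule exI[of _ "\<lambda>U x. x"]) simp
    then show ?thesis unfolding fin_gen_def D_def
      using Ecat Efun ecat_finite E1(2,3) E2(2,3) by blast
  qed
  have fin: "finite (st X)" "finite (ac X)"
    using X1(1) X2(1) unfolding stX acX finite_type_def by auto
  have ftX: "finite_type C X" unfolding finite_type_def is_automaton_def
    using psh stE acE fg fin by simp
  have stX': "st X = (\<lambda>(U, x). (U, emb 1 ` \<eta>2 U x)) ` st X2 \<union> (\<lambda>(U, x). (U, emb 0 ` \<eta>1 U x)) ` st X1"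
    and acX': "ac X = (\<lambda>(U, x). (U, emb 1 ` \<eta>2 U x)) ` ac X2 \<union> (\<lambda>(U, x). (U, emb 0 ` \<eta>1 U x)) ` ac X1"
    using stX acX by auto
  have "Lang C X = L1 \<union> L2"
  proof
    have s1: "(U, x) \<in> st X1 \<Longrightarrow> (U, emb 0 ` \<eta>1 U x) \<in> st X" for U x unfolding stX by force
    have a1: "(U, x) \<in> ac X1 \<Longrightarrow> (U, emb 0 ` \<eta>1 U x) \<in> ac X" for U x unfolding acX by force
    have s2: "(U, x) \<in> st X2 \<Longrightarrow> (U, emb 1 ` \<eta>2 U x) \<in> st X" for U x unfolding stX by force
    have a2: "(U, x) \<in> ac X2 \<Longrightarrow> (U, emb 1 ` \<eta>2 U x) \<in> ac X" for U x unfolding acX by force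
    have "Lang C X1 \<subseteq> Lang C X" by (rule side_in[OF dc gd gd1 cat XD i1(1) s1 a1])
    moreover have "Lang C X2 \<subseteq> Lang C X" by (rule side_in[OF dc' gd gd2 cat XD i2(1) s2 a2])
    ultimately show "L1 \<union> L2 \<subseteq> Lang C X" using X1(2) X2(2) by simp
  next
    show "Lang C X \<subseteq> L1 \<union> L2"
    proof
      fix G assume "G \<in> Lang C X"
      then obtain \<xi> where G: "track_object C G" "aut_hom C G X \<xi>" unfolding Lang_def aut_le_def by blast
      obtain s where s: "st G = {(src G, s)}" using tobj_st[OF G(1)] by blast
      have "(src G, \<xi> (src G) s) \<in> st X" using G(2) s unfolding aut_hom_def by auto
      then consider x0 where "(src G, x0) \<in> st X1" "\<xi> (src G) s = emb 0 ` \<eta>1 (src G) x0"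
        | x0 where "(src G, x0) \<in> st X2" "\<xi> (src G) s = emb 1 ` \<eta>2 (src G) x0"
        unfolding stX by auto
      then show "G \<in> L1 \<union> L2"
      proof cases
        case 1
        have "G \<in> Lang C X1"
          by (rule side_out[OF dc gd gd1 gd2 cat XD i1 aut1 stX acX G _ 1]) (simp add: s)
        then show ?thesis using X1(2) by blast
      next
        case 2
        have "G \<in> Lang C X2"
          by (rule side_out[OF dc' gd gd2 gd1 cat XD i2 aut2 stX' acX' G _ 2]) (simp add: s)
        then show ?thesis using X2(2) by blast
      qed
    qed
  qed
  then show ?thesis using ftX unfolding regular_def by blast
qed

definition E0 :: "(nat,nat) cat" where
  "E0 = \<lparr> obs = {}, mors = {}, dm = id, cd = id, cmp = (\<lambda>g f. g), idt = id \<rparr>"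

lemma regular_empty:
  fixes C :: "('o,'m,'z) dcat_scheme"
  assumes cat: "is_cat C"
  shows "regular C {}"
proof -
  let ?Gob = "\<lambda>n::nat. undefined :: 'o" and ?Gmor = "\<lambda>n::nat. undefined :: 'm"
  define D where "D = functor_diagram E0 ?Gob ?Gmor"
  define X :: "('o,'m) tobj" where "X = colim C D"
  have E0: "is_cat E0" "finite (obs E0)" "finite (mors E0)" "is_functor E0 C ?Gob ?Gmor"
    by (simp_all add: E0_def is_cat_def is_functor_def)
  have gd: "good_diag C D" by (simp add: D_def good_diag_def functor_diagram_def E0_def)
  have stX: "st X = {}" "ac X = {}" by (simp_all add: X_def colim_def)
  have "psh_iso C X (colim C D)"
    unfolding psh_iso_def psh_hom_def X_def by (rule exI[of _ "\<lambda>U x. x"], rule exI[of _ "\<lambda>U x. x"]) simp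
  then have fg: "fin_gen C X" unfolding fin_gen_def D_def using E0 by blast
  have ft: "finite_type C X" unfolding finite_type_def is_automaton_def
    using presheaf_colim[OF gd cat] fg stX by (simp add: X_def)
  have "Lang C X = {}"
  proof (rule ccontr)
    assume "Lang C X \<noteq> {}"
    then obtain G :: "('o,'m) tobj" where "G \<in> Lang C X" by blast
    then obtain \<xi> where G: "track_object C G" "aut_hom C G X \<xi>" unfolding Lang_def aut_le_def by blast
    obtain s where s: "st G = {(src G, s)}" using tobj_st[OF G(1)] by blast
    have "(src G, \<xi> (src G) s) \<in> st X" using G(2) s unfolding aut_hom_def by auto
    then show False using stX by simp
  qed
  then show ?thesis using ft unfolding regular_def by blast
qed

lemma regular_UN:
  fixes C :: "('o,'m,'z) dcat_scheme"
  assumes cat: "is_cat C" and fin: "finite S"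
  shows "(\<forall>p\<in>S. regular C (F p)) \<Longrightarrow> regular C (\<Union>p\<in>S. F p)"
  using fin
proof (induction S rule: finite_induct)
  case empty then show ?case using regular_empty[OF cat] by simp
next
  case (insert p S)
  then have "regular C (F p \<union> (\<Union>q\<in>S. F q))" using regular_union[OF cat] by simp
  then show ?case by simp
qed

lemma lang_restrict:
  fixes C :: "('o,'m,'z) dcat_scheme" and X :: "('o,'m) tobj"
  assumes ft: "finite_type C X"
  shows "regular C (sub_lang (Lang C X) U V)"
proof -
  define X' :: "('o,'m) tobj" where "X' = X\<lparr> st := {e \<in> st X. fst e = U}, ac := {e \<in> ac X. fst e = V} \<rparr>"
  have XX: "Xs X' = Xs X" "act X' = act X" "st X' = {e \<in> st X. fst e = U}" "ac X' = {e \<in> ac X. fst e = V}"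
    by (simp_all add: X'_def)
  have "is_presheaf C X' = is_presheaf C X" unfolding is_presheaf_def XX ..
  moreover have "elems X' = elems X" unfolding elems_def XX ..
  moreover have "fin_gen C X'" using fin_gen_cong[OF XX(1,2)] ft unfolding finite_type_def by blast
  ultimately have ftX': "finite_type C X'" using ft unfolding finite_type_def is_automaton_def XX by auto
  have "Lang C X' = sub_lang (Lang C X) U V"
  proof (intro set_eqI iffI)
    fix G assume "G \<in> Lang C X'"
    then obtain \<xi> where G: "track_object C G" "aut_hom C G X' \<xi>" unfolding Lang_def aut_le_def by blast
    obtain s where s: "st G = {(src G, s)}" using tobj_st[OF G(1)] by blast
    obtain a where a: "ac G = {(tgt G, a)}" using tobj_ac[OF G(1)] by blast
    have "(src G, \<xi> (src G) s) \<in> st X'" "(tgt G, \<xi> (tgt G) a) \<in> ac X'"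
      using G(2) s a unfolding aut_hom_def by auto
    then have "src G = U" "tgt G = V" unfolding XX by auto
    moreover have "aut_hom C G X \<xi>" using G(2) unfolding aut_hom_def psh_hom_def XX by auto
    ultimately show "G \<in> sub_lang (Lang C X) U V"
      unfolding sub_lang_def Lang_def aut_le_def using G(1) by blast
  next
    fix G assume "G \<in> sub_lang (Lang C X) U V"
    then obtain \<xi> where G: "track_object C G" "aut_hom C G X \<xi>" "src G = U" "tgt G = V"
      unfolding sub_lang_def Lang_def aut_le_def by blast
    obtain s where s: "st G = {(src G, s)}" using tobj_st[OF G(1)] by blast
    obtain a where a: "ac G = {(tgt G, a)}" using tobj_ac[OF G(1)] by blast
    have "aut_hom C G X' \<xi>" using G(2,3,4) s a unfolding aut_hom_def psh_hom_def XX by auto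
    then show "G \<in> Lang C X'" unfolding Lang_def aut_le_def using G(1) by blast
  qed
  then show ?thesis using ftX' unfolding regular_def by blast
qed

theorem lemma11:
  fixes C :: "('o,'m) dcat" and L :: "('o,'m) tobj set"
  assumes "is_dcat C" and "is_language C L"
  shows "regular C L \<longleftrightarrow>
           finite (src ` L) \<and> finite (tgt ` L) \<and>
           (\<forall>U\<in>src ` L. \<forall>V\<in>tgt ` L. regular C (sub_lang L U V))"
proof -
  have cat: "is_cat C" using assms(1) unfolding is_dcat_def by blast
  have tob: "G \<in> L \<Longrightarrow> track_object C G" for G using assms(2) unfolding is_language_def by blast
  show ?thesis
  proof
    assume "regular C L"
    then obtain X :: "('o,'m) tobj" where X: "finite_type C X" "L = Lang C X" unfolding regular_def by blast
    have "src ` L \<subseteq> fst ` st X"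
    proof
      fix U assume "U \<in> src ` L"
      then obtain G where G: "G \<in> L" "U = src G" by blast
      then obtain \<xi> where xi: "aut_hom C G X \<xi>" using X(2) unfolding Lang_def aut_le_def by blast
      obtain s where s: "st G = {(src G, s)}" using tobj_st[OF tob[OF G(1)]] by blast
      have "(src G, \<xi> (src G) s) \<in> st X" using xi s unfolding aut_hom_def by auto
      then show "U \<in> fst ` st X" using G(2) by force
    qed
    moreover have "tgt ` L \<subseteq> fst ` ac X"
    proof
      fix U assume "U \<in> tgt ` L"
      then obtain G where G: "G \<in> L" "U = tgt G" by blast
      then obtain \<xi> where xi: "aut_hom C G X \<xi>" using X(2) unfolding Lang_def aut_le_def by blast
      obtain s where s: "ac G = {(tgt G, s)}" using tobj_ac[OF tob[OF G(1)]] by blast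
      have "(tgt G, \<xi> (tgt G) s) \<in> ac X" using xi s unfolding aut_hom_def by auto
      then show "U \<in> fst ` ac X" using G(2) by force
    qed
    moreover have "finite (st X)" "finite (ac X)" using X(1) unfolding finite_type_def by auto
    ultimately have "finite (src ` L)" "finite (tgt ` L)" by (meson finite_imageI finite_subset)+
    moreover have "regular C (sub_lang L U V)" for U V using lang_restrict[OF X(1)] X(2) by simp
    ultimately show "finite (src ` L) \<and> finite (tgt ` L) \<and>
           (\<forall>U\<in>src ` L. \<forall>V\<in>tgt ` L. regular C (sub_lang L U V))" by blast
  next
    assume R: "finite (src ` L) \<and> finite (tgt ` L) \<and>
           (\<forall>U\<in>src ` L. \<forall>V\<in>tgt ` L. regular C (sub_lang L U V))"
    let ?S = "src ` L \<times> tgt ` L"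
    have "regular C (\<Union>p\<in>?S. sub_lang L (fst p) (snd p))"
      using regular_UN[OF cat, of ?S "\<lambda>p. sub_lang L (fst p) (snd p)"] R by auto
    moreover have "(\<Union>p\<in>?S. sub_lang L (fst p) (snd p)) = L"
    proof
      show "(\<Union>p\<in>?S. sub_lang L (fst p) (snd p)) \<subseteq> L" unfolding sub_lang_def by auto
      show "L \<subseteq> (\<Union>p\<in>?S. sub_lang L (fst p) (snd p))"
      proof
        fix G assume G: "G \<in> L"
        then have "G \<in> sub_lang L (fst (src G, tgt G)) (snd (src G, tgt G))" "(src G, tgt G) \<in> ?S"
          unfolding sub_lang_def by auto
        then show "G \<in> (\<Union>p\<in>?S. sub_lang L (fst p) (snd p))" by blast
      qed
    qed
    ultimately show "regular C L" by simp
  qed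
qed

end
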